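(* There are absolute constants $c,C>0$ such that the following holds. Let $\beta^*\in\mathbb R^d$ have at most $k$ nonzero entries, $\mathbf X\in\mathbb R^{n\times d}$ have i.i.d. $N(0,1)$ entries, and $\eta\in\mathbb R^n$ be deterministic with $|\{i:|\eta_i|\le1\}|\ge\alpha n$ for some $\alpha\in(0,1]$; let $\mathbf y=\mathbf X\beta^*+\eta$. Let $\hat\beta$ be obtained by running the Coordinate-wise Median Algorithm on $(\mathbf y,\mathbf X)$ to get $\beta'$, and then keeping the $k$ entries of $\beta'$ of largest absolute value and setting all other entries to $0$. Then for any $0<\tau\le\alpha^2n$, \[\|\beta^*-\hat\beta\|^2\le C\cdot\frac{k\,\tau}{\alpha^2n}\big(1+\|\beta^*\|^2\big)\] with probability at least $1-2\exp(\ln d-c\tau)$.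
   Context: Coordinate-wise Median Algorithm on input $(y,X)\in\mathbb R^n\times\mathbb R^{n\times d}$: sample independent $w_i\sim N(0,1)$ and Rademacher signs $\sigma_i$, independent of everything else, and set $y'_i=\sigma_iy_i+w_i$, $X'_{i,\cdot}=\sigma_iX_{i,\cdot}$. For each $j\in[d]$ let $M_j=\{i:|X'_{ij}|\ge1/2\}$ and let $\beta'_j$ be the median of $\{y'_i/X'_{ij}:i\in M_j\}$. Output $\beta'=(\beta'_1,\dots,\beta'_d)$. *)

theory Defs
  imports "HOL-Probability.Probability"
begin

definition std_gauss :: "real measure" where
  "std_gauss = density lborel std_normal_density"

definition rademacher :: "real measure" where
  "rademacher = measure_pmf (pmf_of_set {-1, 1})"

text \<open>Joint sample space: the design matrix X (entries indexed by (i,j), i<n, j<d, iid N(0,1)),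
  the noise w (w_i iid N(0,1)) and the signs sigma (iid Rademacher), all independent.\<close>
definition sample_space :: "nat \<Rightarrow> nat \<Rightarrow>
    (((nat \<times> nat \<Rightarrow> real) \<times> (nat \<Rightarrow> real)) \<times> (nat \<Rightarrow> real)) measure" where
  "sample_space n d =
     (PiM ({..<n} \<times> {..<d}) (\<lambda>_. std_gauss) \<Otimes>\<^sub>M PiM {..<n} (\<lambda>_. std_gauss))
       \<Otimes>\<^sub>M PiM {..<n} (\<lambda>_. rademacher)"

text \<open>Median of a finite list of reals: middle element for odd length, average of the two middle
  elements for even length; 0 for the empty list (convention).\<close>
definition median_list :: "real list \<Rightarrow> real" where
  "median_list xs = (let s = sort xs; m = length xs in
     if m = 0 then 0 else (s ! ((m - 1) div 2) + s ! (m div 2)) / 2)"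

text \<open>Coordinate-wise Median Algorithm, with the internal randomness w, sigma given explicitly.\<close>
definition cwm :: "nat \<Rightarrow> (nat \<Rightarrow> real) \<Rightarrow> (nat \<times> nat \<Rightarrow> real) \<Rightarrow> (nat \<Rightarrow> real)
    \<Rightarrow> (nat \<Rightarrow> real) \<Rightarrow> nat \<Rightarrow> real" where
  "cwm n y X w \<sigma> j =
     (let y' = (\<lambda>i. \<sigma> i * y i + w i);
          X' = (\<lambda>i. \<sigma> i * X (i, j));
          M = {i. i < n \<and> \<bar>X' i\<bar> \<ge> 1/2}
      in median_list (map (\<lambda>i. y' i / X' i) (sorted_list_of_set M)))"

text \<open>Admissible supports for keeping the k largest-in-absolute-value entries (any tie-breaking).\<close>
definition top_k_sets :: "nat \<Rightarrow> nat \<Rightarrow> (nat \<Rightarrow> real) \<Rightarrow> nat set set" where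
  "top_k_sets d k b = {S. S \<subseteq> {..<d} \<and> card S = min k d \<and>
      (\<forall>i\<in>S. \<forall>j\<in>{..<d} - S. \<bar>b j\<bar> \<le> \<bar>b i\<bar>)}"

definition restrict_to :: "nat set \<Rightarrow> (nat \<Rightarrow> real) \<Rightarrow> nat \<Rightarrow> real" where
  "restrict_to S b = (\<lambda>j. if j \<in> S then b j else 0)"

end

theory Submission
  imports Defs
begin

lemma ps_gauss[simp]: "prob_space std_gauss"
  unfolding std_gauss_def by (rule prob_space_normal_density) simp

lemma ps_rad[simp]: "prob_space rademacher"
  unfolding rademacher_def by (rule prob_space_measure_pmf)

lemma space_gauss[simp]: "space std_gauss = UNIV"
  unfolding std_gauss_def by simp

lemma sets_gauss[simp, measurable_cong]: "sets std_gauss = sets borel"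
  unfolding std_gauss_def by simp

lemma space_rad[simp]: "space rademacher = UNIV"
  unfolding rademacher_def by simp

lemma sets_rad[simp]: "sets rademacher = UNIV"
  unfolding rademacher_def by simp

type_synonym idx = "(nat \<times> nat) + (nat + nat)"

definition Idx :: "nat \<Rightarrow> nat \<Rightarrow> idx set" where
  "Idx n d = Inl ` ({..<n} \<times> {..<d}) \<union> Inr ` (Inl ` {..<n} \<union> Inr ` {..<n})"

definition MM :: "idx \<Rightarrow> real measure" where
  "MM k = (case k of Inr (Inr _) \<Rightarrow> rademacher | _ \<Rightarrow> std_gauss)"

definition PP :: "nat \<Rightarrow> nat \<Rightarrow> (idx \<Rightarrow> real) measure" where
  "PP n d = PiM (Idx n d) MM"

definition coordF :: "idx \<Rightarrow> ((nat \<times> nat \<Rightarrow> real) \<times> (nat \<Rightarrow> real)) \<times> (nat \<Rightarrow> real) \<Rightarrow> real" where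
  "coordF k \<omega> = (case k of Inl p \<Rightarrow> fst (fst \<omega>) p | Inr (Inl i) \<Rightarrow> snd (fst \<omega>) i | Inr (Inr i) \<Rightarrow> snd \<omega> i)"

definition FF :: "nat \<Rightarrow> nat \<Rightarrow> ((nat \<times> nat \<Rightarrow> real) \<times> (nat \<Rightarrow> real)) \<times> (nat \<Rightarrow> real) \<Rightarrow> idx \<Rightarrow> real" where
  "FF n d \<omega> = (\<lambda>k\<in>Idx n d. coordF k \<omega>)"

lemma finite_Idx[simp]: "finite (Idx n d)"
  unfolding Idx_def by auto

lemma ps_MM[simp]: "prob_space (MM k)"
  unfolding MM_def by (auto split: sum.split)

lemma space_MM[simp]: "space (MM k) = UNIV"
  unfolding MM_def by (auto split: sum.split)

lemma ps_PP[simp]: "prob_space (PP n d)"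
  unfolding PP_def by (rule prob_space_PiM) simp

lemma ps_sample[simp]: "prob_space (sample_space n d)"
  unfolding sample_space_def
  by (intro prob_space_pair prob_space_PiM) auto

lemma psf_MM: "product_sigma_finite MM"
  unfolding product_sigma_finite_def
  using ps_MM prob_space_imp_sigma_finite by blast

lemma measurable_FF[measurable]: "FF n d \<in> measurable (sample_space n d) (PP n d)"
  unfolding FF_def PP_def
proof (rule measurable_restrict)
  fix k assume k: "k \<in> Idx n d"
  show "coordF k \<in> measurable (sample_space n d) (MM k)"
  proof (cases k)
    case (Inl p)
    with k have p: "p \<in> {..<n} \<times> {..<d}" unfolding Idx_def by auto
    have "(\<lambda>\<omega>. fst (fst \<omega>) p) \<in> measurable (sample_space n d) std_gauss"
      unfolding sample_space_def using p by measurable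
    moreover have "coordF k = (\<lambda>\<omega>. fst (fst \<omega>) p)" using Inl by (simp add: fun_eq_iff coordF_def)
    ultimately show ?thesis using Inl by (simp add: MM_def)
  next
    case (Inr q)
    show ?thesis
    proof (cases q)
      case (Inl i)
      with k Inr have i: "i \<in> {..<n}" unfolding Idx_def by auto
      have "(\<lambda>\<omega>. snd (fst \<omega>) i) \<in> measurable (sample_space n d) std_gauss"
        unfolding sample_space_def using i by measurable
      moreover have "coordF k = (\<lambda>\<omega>. snd (fst \<omega>) i)" using Inl Inr by (simp add: fun_eq_iff coordF_def)
      ultimately show ?thesis using Inl Inr by (simp add: MM_def)
    next
      case (Inr i)
      with k \<open>k = Inr q\<close> have i: "i \<in> {..<n}" unfolding Idx_def by auto
      have "(\<lambda>\<omega>. snd \<omega> i) \<in> measurable (sample_space n d) rademacher"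
        unfolding sample_space_def using i by measurable
      moreover have "coordF k = (\<lambda>\<omega>. snd \<omega> i)" using Inr \<open>k = Inr q\<close> by (simp add: fun_eq_iff coordF_def)
      ultimately show ?thesis using Inr \<open>k = Inr q\<close> by (simp add: MM_def)
    qed
  qed
qed

lemma space_sample: "space (sample_space n d) =
   (PiE ({..<n} \<times> {..<d}) (\<lambda>_. UNIV) \<times> PiE {..<n} (\<lambda>_. UNIV)) \<times> PiE {..<n} (\<lambda>_. UNIV)"
  unfolding sample_space_def by (simp add: space_pair_measure space_PiM)

lemma prod_Idx:
  fixes f :: "idx \<Rightarrow> ennreal"
  shows "(\<Prod>k\<in>Idx n d. f k) = (\<Prod>p\<in>{..<n} \<times> {..<d}. f (Inl p)) * (\<Prod>i\<in>{..<n}. f (Inr (Inl i))) * (\<Prod>i\<in>{..<n}. f (Inr (Inr i)))"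
proof -
  have "(\<Prod>k\<in>Idx n d. f k) = (\<Prod>k\<in>Inl ` ({..<n} \<times> {..<d}). f k) * (\<Prod>k\<in>Inr ` (Inl ` {..<n} \<union> Inr ` {..<n}). f k)"
    unfolding Idx_def by (rule prod.union_disjoint) auto
  also have "(\<Prod>k\<in>Inr ` (Inl ` {..<n} \<union> Inr ` {..<n}). f k) = (\<Prod>k\<in>(Inl ` {..<n} \<union> Inr ` {..<n}). f (Inr k))"
    by (subst prod.reindex) (auto simp: o_def)
  also have "\<dots> = (\<Prod>k\<in>Inl ` {..<n}. f (Inr k)) * (\<Prod>k\<in>Inr ` {..<n}. f (Inr k))"
    by (rule prod.union_disjoint) auto
  also have "(\<Prod>k\<in>Inl ` {..<n}. f (Inr k)) = (\<Prod>i\<in>{..<n}. f (Inr (Inl i)))"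
    by (subst prod.reindex) auto
  also have "(\<Prod>k\<in>Inr ` {..<n}. f (Inr k)) = (\<Prod>i\<in>{..<n}. f (Inr (Inr i)))"
    by (subst prod.reindex) auto
  also have "(\<Prod>k\<in>Inl ` ({..<n} \<times> {..<d}). f k) = (\<Prod>p\<in>{..<n} \<times> {..<d}. f (Inl p))"
    by (subst prod.reindex) auto
  finally show ?thesis by (simp add: mult.assoc)
qed

lemma ball_Idx: "(\<forall>k\<in>Idx n d. P k) \<longleftrightarrow> (\<forall>p\<in>{..<n} \<times> {..<d}. P (Inl p)) \<and> (\<forall>i\<in>{..<n}. P (Inr (Inl i))) \<and> (\<forall>i\<in>{..<n}. P (Inr (Inr i)))"
  unfolding Idx_def by blast

lemma distr_FF: "distr (sample_space n d) (PP n d) (FF n d) = PP n d"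
  unfolding PP_def
proof (rule product_sigma_finite.PiM_eqI[OF psf_MM])
  show "finite (Idx n d)" by simp
  show "sets (distr (sample_space n d) (Pi\<^sub>M (Idx n d) MM) (FF n d)) = sets (Pi\<^sub>M (Idx n d) MM)" by simp
  fix A assume A: "\<And>i. i \<in> Idx n d \<Longrightarrow> A i \<in> sets (MM i)"
  let ?A1 = "\<lambda>p. A (Inl p)" and ?A2 = "\<lambda>i. A (Inr (Inl i))" and ?A3 = "\<lambda>i. A (Inr (Inr i))"
  have A1: "?A1 p \<in> sets std_gauss" if "p \<in> {..<n} \<times> {..<d}" for p
    using A[of "Inl p"] that by (auto simp: Idx_def MM_def)
  have A2: "?A2 i \<in> sets std_gauss" if "i \<in> {..<n}" for i
    using A[of "Inr (Inl i)"] that by (auto simp: Idx_def MM_def)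
  have A3: "?A3 i \<in> sets rademacher" if "i \<in> {..<n}" for i
    by simp
  have PiE_sets: "PiE (Idx n d) A \<in> sets (Pi\<^sub>M (Idx n d) MM)"
    using A by (intro sets_PiM_I_finite) auto
  have pre: "FF n d -` PiE (Idx n d) A \<inter> space (sample_space n d) =
     (PiE ({..<n} \<times> {..<d}) ?A1 \<times> PiE {..<n} ?A2) \<times> PiE {..<n} ?A3"
  proof (rule set_eqI)
    fix x :: "((nat \<times> nat \<Rightarrow> real) \<times> (nat \<Rightarrow> real)) \<times> (nat \<Rightarrow> real)"
    obtain X w \<sigma> where x: "x = ((X, w), \<sigma>)" by (metis prod.collapse)
    have "FF n d x \<in> PiE (Idx n d) A \<longleftrightarrow> (\<forall>k\<in>Idx n d. coordF k x \<in> A k)"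
      unfolding FF_def by (auto simp: PiE_iff)
    also have "\<dots> \<longleftrightarrow> (\<forall>p\<in>{..<n} \<times> {..<d}. X p \<in> ?A1 p) \<and> (\<forall>i\<in>{..<n}. w i \<in> ?A2 i) \<and> (\<forall>i\<in>{..<n}. \<sigma> i \<in> ?A3 i)"
      unfolding ball_Idx by (simp add: x coordF_def)
    finally show "x \<in> FF n d -` PiE (Idx n d) A \<inter> space (sample_space n d) \<longleftrightarrow>
       x \<in> (PiE ({..<n} \<times> {..<d}) ?A1 \<times> PiE {..<n} ?A2) \<times> PiE {..<n} ?A3"
      unfolding space_sample x by (auto simp: PiE_iff)
  qed
  interpret G1: prob_space "PiM ({..<n} \<times> {..<d}) (\<lambda>_. std_gauss)" by (rule prob_space_PiM) simp
  interpret G2: prob_space "PiM {..<n} (\<lambda>_. std_gauss)" by (rule prob_space_PiM) simp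
  interpret G3: prob_space "PiM {..<n} (\<lambda>_. rademacher)" by (rule prob_space_PiM) simp
  interpret G12: pair_prob_space "PiM ({..<n} \<times> {..<d}) (\<lambda>_. std_gauss)" "PiM {..<n} (\<lambda>_. std_gauss)" ..
  interpret G123: pair_prob_space "PiM ({..<n} \<times> {..<d}) (\<lambda>_. std_gauss) \<Otimes>\<^sub>M PiM {..<n} (\<lambda>_. std_gauss)" "PiM {..<n} (\<lambda>_. rademacher)" ..
  have psg: "product_sigma_finite (\<lambda>_::'a. std_gauss)"
    unfolding product_sigma_finite_def using ps_gauss prob_space_imp_sigma_finite by blast
  have psr: "product_sigma_finite (\<lambda>_::'a. rademacher)"
    unfolding product_sigma_finite_def using ps_rad prob_space_imp_sigma_finite by blast
  have e1: "emeasure (PiM ({..<n} \<times> {..<d}) (\<lambda>_. std_gauss)) (PiE ({..<n} \<times> {..<d}) ?A1) = (\<Prod>p\<in>{..<n} \<times> {..<d}. emeasure std_gauss (?A1 p))"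
    using A1 by (intro product_sigma_finite.emeasure_PiM[OF psg]) auto
  have e2: "emeasure (PiM {..<n} (\<lambda>_. std_gauss)) (PiE {..<n} ?A2) = (\<Prod>i\<in>{..<n}. emeasure std_gauss (?A2 i))"
    using A2 by (intro product_sigma_finite.emeasure_PiM[OF psg]) auto
  have e3: "emeasure (PiM {..<n} (\<lambda>_. rademacher)) (PiE {..<n} ?A3) = (\<Prod>i\<in>{..<n}. emeasure rademacher (?A3 i))"
    by (intro product_sigma_finite.emeasure_PiM[OF psr]) auto
  have s1: "PiE ({..<n} \<times> {..<d}) ?A1 \<in> sets (PiM ({..<n} \<times> {..<d}) (\<lambda>_. std_gauss))"
    using A1 by (intro sets_PiM_I_finite) auto
  have s2: "PiE {..<n} ?A2 \<in> sets (PiM {..<n} (\<lambda>_. std_gauss))"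
    using A2 by (intro sets_PiM_I_finite) auto
  have s3: "PiE {..<n} ?A3 \<in> sets (PiM {..<n} (\<lambda>_. rademacher))"
    by (intro sets_PiM_I_finite) auto
  have "emeasure (distr (sample_space n d) (Pi\<^sub>M (Idx n d) MM) (FF n d)) (PiE (Idx n d) A)
      = emeasure (sample_space n d) (FF n d -` PiE (Idx n d) A \<inter> space (sample_space n d))"
    using PiE_sets measurable_FF[of n d] unfolding PP_def by (subst emeasure_distr) auto
  also have "\<dots> = emeasure (sample_space n d) ((PiE ({..<n} \<times> {..<d}) ?A1 \<times> PiE {..<n} ?A2) \<times> PiE {..<n} ?A3)"
    by (simp only: pre)
  also have "\<dots> = emeasure (PiM ({..<n} \<times> {..<d}) (\<lambda>_. std_gauss)) (PiE ({..<n} \<times> {..<d}) ?A1)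
       * emeasure (PiM {..<n} (\<lambda>_. std_gauss)) (PiE {..<n} ?A2)
       * emeasure (PiM {..<n} (\<lambda>_. rademacher)) (PiE {..<n} ?A3)"
    unfolding sample_space_def
    apply (subst G3.emeasure_pair_measure_Times)
      apply (rule pair_measureI) using s1 s2 s3 apply auto[3]
    apply (subst G2.emeasure_pair_measure_Times) using s1 s2 apply auto
    done
  also have "\<dots> = (\<Prod>k\<in>Idx n d. emeasure (MM k) (A k))"
    unfolding e1 e2 e3 prod_Idx by (simp add: MM_def)
  finally show "emeasure (distr (sample_space n d) (Pi\<^sub>M (Idx n d) MM) (FF n d)) (PiE (Idx n d) A) = (\<Prod>k\<in>Idx n d. emeasure (MM k) (A k))" .
qed

lemma measure_sample_FF:
  assumes "B \<in> sets (PP n d)"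
  shows "measure (sample_space n d) (FF n d -` B \<inter> space (sample_space n d)) = measure (PP n d) B"
  using assms by (subst distr_FF[symmetric, of n d], subst measure_distr) auto

lemma count_sort_eq: "length (filter P (sort xs)) = length (filter P xs)"
  by (metis mset_filter mset_sort size_mset)

lemma count_map_sls:
  assumes "finite M"
  shows "length (filter P (map f (sorted_list_of_set M))) = card {i\<in>M. P (f i)}"
proof -
  have "length (filter P (map f (sorted_list_of_set M))) = length (filter (P \<circ> f) (sorted_list_of_set M))"
    by (simp add: filter_map)
  also have "\<dots> = card ({x. (P \<circ> f) x} \<inter> set (sorted_list_of_set M))"
    by (rule distinct_length_filter) simp
  also have "\<dots> = card {i\<in>M. P (f i)}"
  proof -
    have "set (sorted_list_of_set M) = M" using assms by simp
    then have "{x. (P \<circ> f) x} \<inter> set (sorted_list_of_set M) = {i\<in>M. P (f i)}" by auto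
    then show ?thesis by (rule arg_cong)
  qed
  finally show ?thesis .
qed
lemma sum_bool_card:
  fixes n :: nat
  assumes "M \<subseteq> {..<n}"
  shows "(\<Sum>i<n. (of_bool (i \<in> M \<and> P i) :: real)) = real (card {i\<in>M. P i})"
proof -
  have "{..<n} \<inter> {i. i \<in> M \<and> P i} = {i\<in>M. P i}" using assms by auto
  moreover have "(\<Sum>i<n. (of_bool (i \<in> M \<and> P i) :: real)) = real (card ({..<n} \<inter> {i. i \<in> M \<and> P i}))"
    by (rule sum_of_bool_eq) simp_all
  ultimately show ?thesis by simp
qed
lemma med_upper:
  fixes n :: nat
  assumes M: "M \<subseteq> {..<n}" and med: "median_list (map f (sorted_list_of_set M)) > a"
  shows "0 \<le> (\<Sum>i<n. (of_bool (i \<in> M \<and> f i > a) - of_bool (i \<in> M \<and> f i \<le> a) :: real))"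
proof -
  have fin: "finite M" using M by (rule finite_subset) simp
  let ?L = "map f (sorted_list_of_set M)"
  define s where "s = sort ?L"
  define m where "m = length ?L"
  have mcard: "m = card M" unfolding m_def using fin by simp
  have ls: "length s = m" unfolding s_def m_def by simp
  have sorted: "sorted s" unfolding s_def by simp
  have c1: "card {i\<in>M. f i > a} = length (filter (\<lambda>x. x > a) s)"
    unfolding s_def count_sort_eq count_map_sls[OF fin] ..
  have c2: "card {i\<in>M. f i \<le> a} = length (filter (\<lambda>x. x \<le> a) s)"
    unfolding s_def count_sort_eq count_map_sls[OF fin] ..
  have tot: "card {i\<in>M. f i > a} + card {i\<in>M. f i \<le> a} = m"
  proof -
    have "card {i\<in>M. f i > a} + card {i\<in>M. f i \<le> a} = card ({i\<in>M. f i > a} \<union> {i\<in>M. f i \<le> a})"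
      using fin by (intro card_Un_disjoint[symmetric]) auto
    also have "{i\<in>M. f i > a} \<union> {i\<in>M. f i \<le> a} = M" by auto
    finally show ?thesis using mcard by simp
  qed
  have key: "2 * card {i\<in>M. f i > a} \<ge> m"
  proof (cases "m = 0")
    case True then show ?thesis by simp
  next
    case False
    have medeq: "median_list ?L = (s ! ((m - 1) div 2) + s ! (m div 2)) / 2"
      using False unfolding median_list_def s_def m_def Let_def by simp
    have d1: "(m - 1) div 2 \<le> m div 2" by (simp add: div_le_mono)
    have d2: "m div 2 < length s" using False ls by simp
    have "s ! ((m - 1) div 2) \<le> s ! (m div 2)"
      using sorted_nth_mono[OF sorted d1 d2] .
    moreover have "a < (s ! ((m - 1) div 2) + s ! (m div 2)) / 2" using med by (simp only: medeq)
    moreover have "\<And>u v. u \<le> v \<Longrightarrow> a < (u + v) / 2 \<Longrightarrow> a < (v::real)" by (simp add: field_simps)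
    ultimately have ha: "s ! (m div 2) > a" by blast
    have "{m div 2..<m} \<subseteq> {k. k < length s \<and> s ! k > a}"
    proof
      fix k assume "k \<in> {m div 2..<m}"
      then have "m div 2 \<le> k" "k < m" by auto
      then have "s ! (m div 2) \<le> s ! k" using sorted ls by (intro sorted_nth_mono) auto
      then show "k \<in> {k. k < length s \<and> s ! k > a}" using ha \<open>k < m\<close> ls by auto
    qed
    then have "card {m div 2..<m} \<le> card {k. k < length s \<and> s ! k > a}"
      by (intro card_mono) auto
    then have "m - m div 2 \<le> length (filter (\<lambda>x. x > a) s)"
      by (simp add: length_filter_conv_card)
    then show ?thesis using c1 by linarith
  qed
  have "(\<Sum>i<n. (of_bool (i \<in> M \<and> f i > a) - of_bool (i \<in> M \<and> f i \<le> a) :: real))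
      = real (card {i\<in>M. f i > a}) - real (card {i\<in>M. f i \<le> a})"
    unfolding sum_subtractf sum_bool_card[OF M] ..
  then show ?thesis using key tot by linarith
qed

lemma med_lower:
  fixes n :: nat
  assumes M: "M \<subseteq> {..<n}" and med: "median_list (map f (sorted_list_of_set M)) < a"
  shows "0 \<le> (\<Sum>i<n. (of_bool (i \<in> M \<and> f i < a) - of_bool (i \<in> M \<and> f i \<ge> a) :: real))"
proof -
  have fin: "finite M" using M by (rule finite_subset) simp
  let ?L = "map f (sorted_list_of_set M)"
  define s where "s = sort ?L"
  define m where "m = length ?L"
  have mcard: "m = card M" unfolding m_def using fin by simp
  have ls: "length s = m" unfolding s_def m_def by simp
  have sorted: "sorted s" unfolding s_def by simp
  have c1: "card {i\<in>M. f i < a} = length (filter (\<lambda>x. x < a) s)"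
    unfolding s_def count_sort_eq count_map_sls[OF fin] ..
  have tot: "card {i\<in>M. f i < a} + card {i\<in>M. f i \<ge> a} = m"
  proof -
    have "card {i\<in>M. f i < a} + card {i\<in>M. f i \<ge> a} = card ({i\<in>M. f i < a} \<union> {i\<in>M. f i \<ge> a})"
      using fin by (intro card_Un_disjoint[symmetric]) auto
    also have "{i\<in>M. f i < a} \<union> {i\<in>M. f i \<ge> a} = M" by auto
    finally show ?thesis using mcard by simp
  qed
  have key: "2 * card {i\<in>M. f i < a} \<ge> m"
  proof (cases "m = 0")
    case True then show ?thesis by simp
  next
    case False
    have medeq: "median_list ?L = (s ! ((m - 1) div 2) + s ! (m div 2)) / 2"
      using False unfolding median_list_def s_def m_def Let_def by simp
    have d1: "(m - 1) div 2 \<le> m div 2" by (simp add: div_le_mono)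
    have d2: "m div 2 < length s" using False ls by simp
    have "s ! ((m - 1) div 2) \<le> s ! (m div 2)"
      using sorted_nth_mono[OF sorted d1 d2] .
    moreover have "(s ! ((m - 1) div 2) + s ! (m div 2)) / 2 < a" using med by (simp only: medeq)
    moreover have "\<And>u v. u \<le> v \<Longrightarrow> (u + v) / 2 < a \<Longrightarrow> u < (a::real)" by (simp add: field_simps)
    ultimately have ha: "s ! ((m - 1) div 2) < a" by blast
    have "{..(m - 1) div 2} \<subseteq> {k. k < length s \<and> s ! k < a}"
    proof
      fix k assume "k \<in> {..(m - 1) div 2}"
      then have k: "k \<le> (m - 1) div 2" by auto
      then have km: "k < m" using False by linarith
      have "s ! k \<le> s ! ((m - 1) div 2)" using sorted ls k False by (intro sorted_nth_mono) auto
      then show "k \<in> {k. k < length s \<and> s ! k < a}" using ha km ls by auto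
    qed
    then have "card {..(m - 1) div 2} \<le> card {k. k < length s \<and> s ! k < a}"
      by (intro card_mono) auto
    then have "(m - 1) div 2 + 1 \<le> length (filter (\<lambda>x. x < a) s)"
      by (simp add: length_filter_conv_card)
    then show ?thesis using c1 False by linarith
  qed
  have "(\<Sum>i<n. (of_bool (i \<in> M \<and> f i < a) - of_bool (i \<in> M \<and> f i \<ge> a) :: real))
      = real (card {i\<in>M. f i < a}) - real (card {i\<in>M. f i \<ge> a})"
    unfolding sum_subtractf sum_bool_card[OF M] ..
  then show ?thesis using key tot by linarith
qed

lemma topk_bound:
  fixes b b' :: "nat \<Rightarrow> real" and t :: real
  assumes t: "0 \<le> t"
    and err: "\<And>j. j < d \<Longrightarrow> \<bar>b' j - b j\<bar> \<le> t"
    and sp: "card {j. j < d \<and> b j \<noteq> 0} \<le> k"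
    and S: "S \<in> top_k_sets d k b'"
  shows "(\<Sum>j<d. (b j - restrict_to S b' j)\<^sup>2) \<le> 5 * real k * t\<^sup>2"
proof -
  define T where "T = {j. j < d \<and> b j \<noteq> 0}"
  have Sd: "S \<subseteq> {..<d}" and cS: "card S = min k d"
    and top: "\<And>i j. i \<in> S \<Longrightarrow> j \<in> {..<d} - S \<Longrightarrow> \<bar>b' j\<bar> \<le> \<bar>b' i\<bar>"
    using S unfolding top_k_sets_def by auto
  have finS: "finite S" using Sd finite_subset by (metis finite_lessThan)
  have finT: "finite T" unfolding T_def by simp
  have cT: "card T \<le> k" using sp unfolding T_def .
  have cTd: "card T \<le> d"
  proof -
    have "T \<subseteq> {..<d}" unfolding T_def by auto
    then have "card T \<le> card {..<d}" by (intro card_mono) auto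
    then show ?thesis by simp
  qed
  have out: "\<bar>b j\<bar> \<le> 2 * t" if j: "j \<in> T - S" for j
  proof -
    have "\<not> S \<subseteq> T"
    proof
      assume ST: "S \<subseteq> T"
      have "card T \<le> card S" using cS cT cTd by simp
      then have "S = T" using ST finT by (metis card_seteq)
      then show False using j by simp
    qed
    then obtain i where i: "i \<in> S" "i \<notin> T" by blast
    have id: "i < d" using i Sd by auto
    have bi: "b i = 0" using i id unfolding T_def by auto
    have jd: "j < d" using j unfolding T_def by auto
    have "\<bar>b' j\<bar> \<le> \<bar>b' i\<bar>" using top[OF i(1)] j jd by auto
    also have "\<bar>b' i\<bar> \<le> t" using err[OF id] bi by simp
    finally have "\<bar>b' j\<bar> \<le> t" .
    moreover have "\<bar>b' j - b j\<bar> \<le> t" using err[OF jd] .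
    ultimately show ?thesis by linarith
  qed
  have split: "(\<Sum>j<d. (b j - restrict_to S b' j)\<^sup>2) =
      (\<Sum>j\<in>S. (b j - b' j)\<^sup>2) + (\<Sum>j\<in>{..<d} - S. (b j)\<^sup>2)"
  proof -
    have "(\<Sum>j<d. (b j - restrict_to S b' j)\<^sup>2) = (\<Sum>j\<in>S. (b j - restrict_to S b' j)\<^sup>2) + (\<Sum>j\<in>{..<d} - S. (b j - restrict_to S b' j)\<^sup>2)"
      using Sd by (metis (no_types, lifting) finite_lessThan sum.subset_diff add.commute)
    also have "(\<Sum>j\<in>S. (b j - restrict_to S b' j)\<^sup>2) = (\<Sum>j\<in>S. (b j - b' j)\<^sup>2)"
      by (rule sum.cong) (auto simp: restrict_to_def)
    also have "(\<Sum>j\<in>{..<d} - S. (b j - restrict_to S b' j)\<^sup>2) = (\<Sum>j\<in>{..<d} - S. (b j)\<^sup>2)"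
      by (rule sum.cong) (auto simp: restrict_to_def)
    finally show ?thesis .
  qed
  have p1: "(\<Sum>j\<in>S. (b j - b' j)\<^sup>2) \<le> real k * t\<^sup>2"
  proof -
    have "(\<Sum>j\<in>S. (b j - b' j)\<^sup>2) \<le> (\<Sum>j\<in>S. t\<^sup>2)"
    proof (rule sum_mono)
      fix j assume "j \<in> S"
      then have "\<bar>b' j - b j\<bar> \<le> t" using err Sd by auto
      then have "\<bar>b j - b' j\<bar> \<le> t" by linarith
      then show "(b j - b' j)\<^sup>2 \<le> t\<^sup>2" using t by (metis abs_le_square_iff abs_of_nonneg)
    qed
    also have "\<dots> = real (card S) * t\<^sup>2" by simp
    also have "\<dots> \<le> real k * t\<^sup>2" using cS by (intro mult_right_mono) auto
    finally show ?thesis .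
  qed
  have p2: "(\<Sum>j\<in>{..<d} - S. (b j)\<^sup>2) \<le> 4 * real k * t\<^sup>2"
  proof -
    have "(\<Sum>j\<in>{..<d} - S. (b j)\<^sup>2) = (\<Sum>j\<in>T - S. (b j)\<^sup>2)"
      by (rule sum.mono_neutral_cong_right) (auto simp: T_def)
    also have "\<dots> \<le> (\<Sum>j\<in>T - S. (2 * t)\<^sup>2)"
    proof (rule sum_mono)
      fix j assume "j \<in> T - S"
      then have "\<bar>b j\<bar> \<le> 2 * t" by (rule out)
      then show "(b j)\<^sup>2 \<le> (2 * t)\<^sup>2" using t by (metis abs_le_square_iff abs_of_nonneg mult_nonneg_nonneg zero_le_numeral)
    qed
    also have "\<dots> = real (card (T - S)) * (4 * t\<^sup>2)" by (simp add: power_mult_distrib)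
    also have "\<dots> \<le> real k * (4 * t\<^sup>2)"
    proof (rule mult_right_mono)
      have "card (T - S) \<le> card T" using finT by (intro card_mono) auto
      then show "real (card (T - S)) \<le> real k" using cT by simp
    qed simp
    finally show ?thesis by simp
  qed
  show ?thesis using split p1 p2 by simp
qed

lemma id_MM_borel: "(\<lambda>v. v) \<in> measurable (MM k) borel"
proof (cases "\<exists>i. k = Inr (Inr i)")
  case True
  then have "MM k = rademacher" unfolding MM_def by auto
  then show ?thesis by (simp add: measurable_def)
next
  case False
  then have "MM k = std_gauss" unfolding MM_def by (auto split: sum.split)
  then show ?thesis by (simp add: measurable_cong_sets[OF sets_gauss refl])
qed

lemma comp_MM_borel: "f \<in> borel_measurable borel \<Longrightarrow> f \<in> borel_measurable (MM k)"
  using measurable_comp[OF id_MM_borel] by (simp add: o_def)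

lemma coord_borel:
  assumes "k \<in> K"
  shows "(\<lambda>x. x k) \<in> borel_measurable (PiM K MM)"
  using measurable_comp[OF measurable_component_singleton[OF assms] id_MM_borel]
  by (simp add: o_def)

lemma coord_borel_PP:
  assumes "k \<in> Idx n d"
  shows "(\<lambda>x. x k) \<in> borel_measurable (PP n d)"
  unfolding PP_def by (rule coord_borel[OF assms])

lemma coord_indep:
  assumes "n > 0" "d > 0"
  shows "prob_space.indep_vars (PP n d) MM (\<lambda>k x. x k) (Idx n d)"
proof -
  interpret prob_space "PP n d" by simp
  have ne: "Idx n d \<noteq> {}" using assms unfolding Idx_def by auto
  have rv: "random_variable (MM k) (\<lambda>x. x k)" if "k \<in> Idx n d" for k
    unfolding PP_def using that by (rule measurable_component_singleton)
  have "distr (PP n d) (\<Pi>\<^sub>M k\<in>Idx n d. MM k) (\<lambda>x. \<lambda>k\<in>Idx n d. x k) = distr (PP n d) (PP n d) (\<lambda>x. x)"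
    by (rule distr_cong) (auto simp: PP_def space_PiM PiE_def extensional_def fun_eq_iff)
  also have "\<dots> = PP n d" by simp
  also have "\<dots> = (\<Pi>\<^sub>M k\<in>Idx n d. distr (PP n d) (MM k) (\<lambda>x. x k))"
    unfolding PP_def by (intro PiM_cong refl distr_PiM_component[symmetric]) auto
  finally show ?thesis
    by (subst indep_vars_iff_distr_eq_PiM'[OF ne rv]) auto
qed

definition Krow :: "nat \<Rightarrow> nat \<Rightarrow> idx set" where
  "Krow d i = Inl ` ({i} \<times> {..<d}) \<union> {Inr (Inl i), Inr (Inr i)}"

lemma row_indep:
  assumes "n > 0" "d > 0"
  shows "prob_space.indep_vars (PP n d) (\<lambda>i. PiM (Krow d i) MM) (\<lambda>i x. restrict x (Krow d i)) {..<n}"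
proof -
  interpret prob_space "PP n d" by simp
  have "indep_vars (\<lambda>i. PiM (Krow d i) MM) (\<lambda>i x. restrict (\<lambda>k. x k) (Krow d i)) {..<n}"
    by (rule indep_vars_restrict[OF coord_indep[OF assms]])
       (auto simp: Krow_def Idx_def disjoint_family_on_def)
  then show ?thesis by simp
qed

lemma uminus_pre: "A \<in> sets borel \<Longrightarrow> uminus -` A \<in> sets (borel :: real measure)"
proof -
  assume A: "A \<in> sets borel"
  have "(uminus::real\<Rightarrow>real) \<in> borel_measurable borel" by simp
  from measurable_sets[OF this A] show ?thesis by simp
qed

lemma gauss_sym:
  assumes A: "A \<in> sets borel"
  shows "emeasure std_gauss (uminus -` A) = emeasure std_gauss A"
proof -
  have mA: "uminus -` A \<in> sets borel" using A by (rule uminus_pre)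
  have "emeasure std_gauss (uminus -` A) = (\<integral>\<^sup>+x. ennreal (std_normal_density x) * indicator (uminus -` A) x \<partial>lborel)"
    unfolding std_gauss_def using mA by (simp add: emeasure_density)
  also have "\<dots> = (\<integral>\<^sup>+x. (\<lambda>y. ennreal (std_normal_density y) * indicator A y) (- x) \<partial>lborel)"
    by (intro nn_integral_cong) (simp add: normal_density_def indicator_def)
  also have "\<dots> = (\<integral>\<^sup>+y. ennreal (std_normal_density y) * indicator A y \<partial>(distr lborel borel uminus))"
    using A by (subst nn_integral_distr) auto
  also have "\<dots> = (\<integral>\<^sup>+y. ennreal (std_normal_density y) * indicator A y \<partial>lborel)"
    by (simp add: lborel_distr_uminus)
  also have "\<dots> = emeasure std_gauss A"
    unfolding std_gauss_def using A by (simp add: emeasure_density)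
  finally show ?thesis .
qed

definition flip :: "idx set \<Rightarrow> (idx \<Rightarrow> real) \<Rightarrow> idx \<Rightarrow> real" where
  "flip C x = (\<lambda>k. if k \<in> C then - x k else x k)"

lemma MM_Inl[simp]: "MM (Inl p) = std_gauss"
  by (simp add: MM_def)
lemma MM_Inr_Inl[simp]: "MM (Inr (Inl i)) = std_gauss"
  by (simp add: MM_def)
lemma MM_Inr_Inr[simp]: "MM (Inr (Inr i)) = rademacher"
  by (simp add: MM_def)

lemma flip_measurable:
  assumes C: "C \<subseteq> Idx n d" "\<And>k. k \<in> C \<Longrightarrow> MM k = std_gauss"
  shows "flip C \<in> measurable (PP n d) (PP n d)"
  unfolding PP_def flip_def
proof (rule measurable_PiM_single')
  fix k assume k: "k \<in> Idx n d"
  show "(\<lambda>\<omega>. if k \<in> C then - \<omega> k else \<omega> k) \<in> Pi\<^sub>M (Idx n d) MM \<rightarrow>\<^sub>M MM k"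
  proof (cases "k \<in> C")
    case True
    have "(\<lambda>\<omega>. - \<omega> k) \<in> borel_measurable (Pi\<^sub>M (Idx n d) MM)"
      using coord_borel[OF k] by measurable
    then show ?thesis using True C(2)[OF True]
      by (simp add: measurable_cong_sets[OF refl sets_gauss])
  next
    case False
    then show ?thesis using measurable_component_singleton[OF k] by simp
  qed
next
  show "(\<lambda>\<omega> k. if k \<in> C then - \<omega> k else \<omega> k) \<in> space (Pi\<^sub>M (Idx n d) MM) \<rightarrow> (\<Pi>\<^sub>E k\<in>Idx n d. space (MM k))"
    using C(1) by (auto simp: space_PiM PiE_def extensional_def)
qed

lemma flip_preserves:
  assumes C: "C \<subseteq> Idx n d" "\<And>k. k \<in> C \<Longrightarrow> MM k = std_gauss"
  shows "distr (PP n d) (PP n d) (flip C) = PP n d"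
proof -
  have meas: "flip C \<in> measurable (PP n d) (PP n d)" by (rule flip_measurable[OF C])
  show ?thesis
    unfolding PP_def
  proof (rule product_sigma_finite.PiM_eqI[OF psf_MM])
    show "finite (Idx n d)" by simp
    show "sets (distr (Pi\<^sub>M (Idx n d) MM) (Pi\<^sub>M (Idx n d) MM) (flip C)) = sets (Pi\<^sub>M (Idx n d) MM)" by simp
    fix A assume A: "\<And>i. i \<in> Idx n d \<Longrightarrow> A i \<in> sets (MM i)"
    define A' where "A' k = (if k \<in> C then uminus -` A k else A k)" for k
    have A'sets: "A' k \<in> sets (MM k)" if "k \<in> Idx n d" for k
    proof (cases "k \<in> C")
      case True
      then have "A k \<in> sets borel" using A[OF that] C(2) by simp
      then have "uminus -` A k \<in> sets borel" by (rule uminus_pre)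
      then show ?thesis using True C(2) by (simp add: A'_def)
    qed (use A that in \<open>simp add: A'_def\<close>)
    have pre: "flip C -` PiE (Idx n d) A \<inter> space (Pi\<^sub>M (Idx n d) MM) = PiE (Idx n d) A'"
      using C(1) by (auto simp: flip_def space_PiM PiE_def Pi_def extensional_def A'_def split: if_splits)
    have "emeasure (distr (Pi\<^sub>M (Idx n d) MM) (Pi\<^sub>M (Idx n d) MM) (flip C)) (PiE (Idx n d) A)
       = emeasure (Pi\<^sub>M (Idx n d) MM) (flip C -` PiE (Idx n d) A \<inter> space (Pi\<^sub>M (Idx n d) MM))"
      using meas A unfolding PP_def by (intro emeasure_distr) (auto intro: sets_PiM_I_finite)
    also have "\<dots> = emeasure (Pi\<^sub>M (Idx n d) MM) (PiE (Idx n d) A')" by (simp only: pre)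
    also have "\<dots> = (\<Prod>k\<in>Idx n d. emeasure (MM k) (A' k))"
      using A'sets by (intro product_sigma_finite.emeasure_PiM[OF psf_MM]) auto
    also have "\<dots> = (\<Prod>k\<in>Idx n d. emeasure (MM k) (A k))"
    proof (rule prod.cong)
      fix k assume k: "k \<in> Idx n d"
      show "emeasure (MM k) (A' k) = emeasure (MM k) (A k)"
      proof (cases "k \<in> C")
        case True
        then have "A k \<in> sets borel" using A[OF k] C(2) by simp
        then show ?thesis using True C(2)[OF True] gauss_sym by (simp add: A'_def)
      qed (simp add: A'_def)
    qed simp
    finally show "emeasure (distr (Pi\<^sub>M (Idx n d) MM) (Pi\<^sub>M (Idx n d) MM) (flip C)) (PiE (Idx n d) A) = (\<Prod>k\<in>Idx n d. emeasure (MM k) (A k))" .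
  qed
qed

definition yv :: "nat \<Rightarrow> (nat \<Rightarrow> real) \<Rightarrow> (nat \<Rightarrow> real) \<Rightarrow> (idx \<Rightarrow> real) \<Rightarrow> nat \<Rightarrow> real" where
  "yv d b e x i = (\<Sum>l<d. x (Inl (i, l)) * b l) + e i"

definition rr :: "nat \<Rightarrow> (nat \<Rightarrow> real) \<Rightarrow> (nat \<Rightarrow> real) \<Rightarrow> nat \<Rightarrow> (idx \<Rightarrow> real) \<Rightarrow> nat \<Rightarrow> real" where
  "rr d b e j x i = (x (Inr (Inr i)) * yv d b e x i + x (Inr (Inl i))) / (x (Inr (Inr i)) * x (Inl (i, j)))"

definition inM :: "nat \<Rightarrow> (idx \<Rightarrow> real) \<Rightarrow> nat \<Rightarrow> bool" where
  "inM j x i = (1/2 \<le> \<bar>x (Inr (Inr i)) * x (Inl (i, j))\<bar>)"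

definition col :: "nat \<Rightarrow> nat \<Rightarrow> idx set" where
  "col n j = Inl ` ({..<n} \<times> {j})"

lemma Krow_sub: "i < n \<Longrightarrow> Krow d i \<subseteq> Idx n d"
  unfolding Krow_def Idx_def by auto

lemma rr_meas:
  assumes K: "Krow d i \<subseteq> K" and j: "j < d"
  shows "(\<lambda>x. rr d b e j x i) \<in> borel_measurable (PiM K MM)"
proof -
  have c1: "(\<lambda>x. x (Inl (i, l))) \<in> borel_measurable (PiM K MM)" if "l < d" for l
    using K that by (intro coord_borel) (auto simp: Krow_def)
  have c2: "(\<lambda>x. x (Inr (Inl i))) \<in> borel_measurable (PiM K MM)"
    using K by (intro coord_borel) (auto simp: Krow_def)
  have c3: "(\<lambda>x. x (Inr (Inr i))) \<in> borel_measurable (PiM K MM)"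
    using K by (intro coord_borel) (auto simp: Krow_def)
  have y: "(\<lambda>x. yv d b e x i) \<in> borel_measurable (PiM K MM)"
    unfolding yv_def using c1 by (intro borel_measurable_add borel_measurable_sum borel_measurable_times) auto
  show ?thesis unfolding rr_def
    using y c1[OF j] c2 c3 by (intro borel_measurable_divide borel_measurable_add borel_measurable_times) auto
qed

lemma inM_meas:
  assumes K: "Krow d i \<subseteq> K" and j: "j < d"
  shows "Measurable.pred (PiM K MM) (\<lambda>x. inM j x i)"
proof -
  have c1: "(\<lambda>x. x (Inl (i, j))) \<in> borel_measurable (PiM K MM)"
    using K j by (intro coord_borel) (auto simp: Krow_def)
  have c3: "(\<lambda>x. x (Inr (Inr i))) \<in> borel_measurable (PiM K MM)"
    using K by (intro coord_borel) (auto simp: Krow_def)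
  show ?thesis unfolding inM_def using c1 c3 by measurable
qed

lemma flip_inM: "inM j (flip (col n j) x) i = inM j x i"
  unfolding inM_def flip_def by (auto simp: abs_mult)

lemma flip_rr:
  assumes i: "i < n" and j: "j < d" and M: "inM j x i"
  shows "rr d b e j (flip (col n j) x) i - b j = - (rr d b e j x i - b j)"
proof -
  let ?x = "flip (col n j) x"
  have nz: "x (Inr (Inr i)) * x (Inl (i, j)) \<noteq> 0" using M unfolding inM_def by auto
  have xs: "?x (Inr (Inr i)) = x (Inr (Inr i))" "?x (Inr (Inl i)) = x (Inr (Inl i))"
    "?x (Inl (i, j)) = - x (Inl (i, j))"
    using i by (auto simp: flip_def col_def)
  have "(\<Sum>l<d. ?x (Inl (i, l)) * b l) = (\<Sum>l<d. x (Inl (i, l)) * b l - (if l = j then 2 * x (Inl (i, j)) * b j else 0))"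
    using i by (intro sum.cong) (auto simp: flip_def col_def)
  also have "\<dots> = (\<Sum>l<d. x (Inl (i, l)) * b l) - 2 * x (Inl (i, j)) * b j"
    using j by (simp add: sum_subtractf)
  finally have yflip: "yv d b e ?x i = yv d b e x i - 2 * x (Inl (i, j)) * b j"
    unfolding yv_def by simp
  show ?thesis
    unfolding rr_def xs yflip using nz
    by (simp add: field_simps)
qed


lemma D_meas1:
  assumes i: "i < n" and j: "j < d"
  shows "(\<lambda>x. rr d b e j x i) \<in> borel_measurable (PP n d)"
  unfolding PP_def using rr_meas[OF Krow_sub[OF i] j] by auto

lemma D_meas2:
  assumes i: "i < n" and j: "j < d"
  shows "Measurable.pred (PP n d) (\<lambda>x. inM j x i)"
  unfolding PP_def using inM_meas[OF Krow_sub[OF i] j] by auto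

lemma flip_prob:
  assumes i: "i < n" and j: "j < d"
  shows "measure (PP n d) {x\<in>space (PP n d). inM j x i \<and> rr d b e j x i - b j > t}
       = measure (PP n d) {x\<in>space (PP n d). inM j x i \<and> rr d b e j x i - b j < - t}"
proof -
  have C: "col n j \<subseteq> Idx n d" "\<And>k. k \<in> col n j \<Longrightarrow> MM k = std_gauss"
    using j by (auto simp: col_def Idx_def)
  note m = D_meas1[OF i j, where b=b and e=e] D_meas2[OF i j]
  let ?S = "{x\<in>space (PP n d). inM j x i \<and> rr d b e j x i - b j > t}"
  have Ssets: "?S \<in> sets (PP n d)" using m by measurable
  have fm: "flip (col n j) \<in> measurable (PP n d) (PP n d)" by (rule flip_measurable[OF C])
  have pre: "flip (col n j) -` ?S \<inter> space (PP n d) = {x\<in>space (PP n d). inM j x i \<and> rr d b e j x i - b j < - t}"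
  proof (rule set_eqI, rule iffI)
    fix x assume x: "x \<in> flip (col n j) -` ?S \<inter> space (PP n d)"
    then have M: "inM j x i" using flip_inM by auto
    have "rr d b e j (flip (col n j) x) i - b j > t" using x by auto
    then show "x \<in> {x\<in>space (PP n d). inM j x i \<and> rr d b e j x i - b j < - t}"
      using x M flip_rr[OF i j M, of b e] by auto
  next
    fix x assume x: "x \<in> {x\<in>space (PP n d). inM j x i \<and> rr d b e j x i - b j < - t}"
    then have M: "inM j x i" and xs: "x \<in> space (PP n d)" by auto
    have "flip (col n j) x \<in> space (PP n d)" using measurable_space[OF fm xs] .
    then show "x \<in> flip (col n j) -` ?S \<inter> space (PP n d)"
      using x M flip_rr[OF i j M, of b e] flip_inM by auto
  qed
  have "measure (PP n d) ?S = measure (distr (PP n d) (PP n d) (flip (col n j))) ?S"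
    by (simp add: flip_preserves[OF C])
  also have "\<dots> = measure (PP n d) (flip (col n j) -` ?S \<inter> space (PP n d))"
    using fm Ssets by (rule measure_distr)
  finally show ?thesis unfolding pre .
qed

lemma (in prob_space) expectation_of_bool:
  assumes "Measurable.pred M P"
  shows "expectation (\<lambda>x. of_bool (P x) :: real) = prob {x\<in>space M. P x}"
proof -
  have "expectation (\<lambda>x. of_bool (P x) :: real) = expectation (indicator {x\<in>space M. P x})"
    by (intro Bochner_Integration.integral_cong) (auto simp: indicator_def)
  also have "\<dots> = prob {x\<in>space M. P x}"
  proof -
    have "{x\<in>space M. P x} \<inter> space M = {x\<in>space M. P x}" by auto
    then show ?thesis by (simp only: Bochner_Integration.integral_indicator)
  qed
  finally show ?thesis .
qed

definition Vup :: "nat \<Rightarrow> (nat \<Rightarrow> real) \<Rightarrow> (nat \<Rightarrow> real) \<Rightarrow> nat \<Rightarrow> real \<Rightarrow> nat \<Rightarrow> (idx \<Rightarrow> real) \<Rightarrow> real" where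
  "Vup d b e j a i x = of_bool (inM j x i \<and> rr d b e j x i > a) - of_bool (inM j x i \<and> rr d b e j x i \<le> a)"

definition Vdn :: "nat \<Rightarrow> (nat \<Rightarrow> real) \<Rightarrow> (nat \<Rightarrow> real) \<Rightarrow> nat \<Rightarrow> real \<Rightarrow> nat \<Rightarrow> (idx \<Rightarrow> real) \<Rightarrow> real" where
  "Vdn d b e j a i x = of_bool (inM j x i \<and> rr d b e j x i < a) - of_bool (inM j x i \<and> rr d b e j x i \<ge> a)"

lemma expect_V:
  assumes i: "i < n" and j: "j < d" and t: "0 \<le> t"
  shows "prob_space.expectation (PP n d) (Vup d b e j (b j + t) i)
           = - measure (PP n d) {x\<in>space (PP n d). inM j x i \<and> \<bar>rr d b e j x i - b j\<bar> \<le> t}"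
    and "prob_space.expectation (PP n d) (Vdn d b e j (b j - t) i)
           = - measure (PP n d) {x\<in>space (PP n d). inM j x i \<and> \<bar>rr d b e j x i - b j\<bar> \<le> t}"
proof -
  interpret prob_space "PP n d" by simp
  note m = D_meas1[OF i j, where b=b and e=e] D_meas2[OF i j]
  let ?D = "\<lambda>x. rr d b e j x i - b j"
  let ?g = "{x\<in>space (PP n d). inM j x i \<and> ?D x > t}"
  let ?l = "{x\<in>space (PP n d). inM j x i \<and> ?D x < - t}"
  let ?m = "{x\<in>space (PP n d). inM j x i \<and> \<bar>?D x\<bar> \<le> t}"
  have sg: "?g \<in> sets (PP n d)" and sl: "?l \<in> sets (PP n d)" and sm: "?m \<in> sets (PP n d)"
    using m by measurable
  have gl: "prob ?g = prob ?l" by (rule flip_prob[OF i j])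
  have u1: "prob {x\<in>space (PP n d). inM j x i \<and> ?D x \<ge> - t} = prob ?m + prob ?g"
  proof -
    have e: "{x\<in>space (PP n d). inM j x i \<and> ?D x \<ge> - t} = ?m \<union> ?g" using t by auto
    show ?thesis unfolding e by (rule finite_measure_Union[OF sm sg]) auto
  qed
  have u2: "prob {x\<in>space (PP n d). inM j x i \<and> ?D x \<le> t} = prob ?m + prob ?l"
  proof -
    have e: "{x\<in>space (PP n d). inM j x i \<and> ?D x \<le> t} = ?m \<union> ?l" using t by auto
    show ?thesis unfolding e by (rule finite_measure_Union[OF sm sl]) auto
  qed
  have mp1: "Measurable.pred (PP n d) (\<lambda>x. inM j x i \<and> rr d b e j x i > b j + t)" using m by measurable
  have mp2: "Measurable.pred (PP n d) (\<lambda>x. inM j x i \<and> rr d b e j x i \<le> b j + t)" using m by measurable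
  have mp3: "Measurable.pred (PP n d) (\<lambda>x. inM j x i \<and> rr d b e j x i < b j - t)" using m by measurable
  have mp4: "Measurable.pred (PP n d) (\<lambda>x. inM j x i \<and> rr d b e j x i \<ge> b j - t)" using m by measurable
  have "expectation (Vup d b e j (b j + t) i) =
     expectation (\<lambda>x. of_bool (inM j x i \<and> rr d b e j x i > b j + t) :: real) - expectation (\<lambda>x. of_bool (inM j x i \<and> rr d b e j x i \<le> b j + t) :: real)"
    unfolding Vup_def using mp1 mp2
    by (intro Bochner_Integration.integral_diff integrable_const_bound[where B=1]) auto
  also have "\<dots> = prob ?g - prob {x\<in>space (PP n d). inM j x i \<and> ?D x \<le> t}"
    unfolding expectation_of_bool[OF mp1] expectation_of_bool[OF mp2]
    by (intro arg_cong2[where f="(-)"] arg_cong[where f=prob]) auto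
  finally show "expectation (Vup d b e j (b j + t) i) = - prob ?m" using gl u2 by simp
  have "expectation (Vdn d b e j (b j - t) i) =
     expectation (\<lambda>x. of_bool (inM j x i \<and> rr d b e j x i < b j - t) :: real) - expectation (\<lambda>x. of_bool (inM j x i \<and> rr d b e j x i \<ge> b j - t) :: real)"
    unfolding Vdn_def using mp3 mp4
    by (intro Bochner_Integration.integral_diff integrable_const_bound[where B=1]) auto
  also have "\<dots> = prob ?l - prob {x\<in>space (PP n d). inM j x i \<and> ?D x \<ge> - t}"
    unfolding expectation_of_bool[OF mp3] expectation_of_bool[OF mp4]
    by (intro arg_cong2[where f="(-)"] arg_cong[where f=prob]) auto
  finally show "expectation (Vdn d b e j (b j - t) i) = - prob ?m" using gl u1 by simp
qed

lemma nn_interval_lower: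
  fixes f :: "real \<Rightarrow> real"
  assumes ab: "a \<le> b" and c: "0 \<le> c" and fc: "\<And>v. a \<le> v \<Longrightarrow> v \<le> b \<Longrightarrow> c \<le> f v"
    and S: "{a..b} \<subseteq> S"
  shows "ennreal (c * (b - a)) \<le> (\<integral>\<^sup>+v. ennreal (f v) * indicator S v \<partial>lborel)"
proof -
  have "(\<integral>\<^sup>+v. ennreal c * indicator {a..b} v \<partial>lborel) \<le> (\<integral>\<^sup>+v. ennreal (f v) * indicator S v \<partial>lborel)"
  proof (rule nn_integral_mono)
    fix v show "ennreal c * indicator {a..b} v \<le> ennreal (f v) * indicator S v"
      using fc S by (auto simp: indicator_def intro: ennreal_leI)
  qed
  moreover have "(\<integral>\<^sup>+v. ennreal c * indicator {a..b} v \<partial>lborel) = ennreal c * ennreal (b - a)"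
    using ab by (subst nn_integral_cmult_indicator) auto
  ultimately show ?thesis using c ab by (simp add: ennreal_mult)
qed

lemma exp_neg2: "exp (-2) \<ge> (1/9::real)"
proof -
  have "exp (2::real) = exp (1 + 1)" by simp
  also have "\<dots> = exp 1 * exp 1" by (rule exp_add)
  also have "\<dots> \<le> 3 * 3" using exp_le by (intro mult_mono) auto
  finally have "exp (2::real) \<le> 9" by simp
  then have "1 / 9 \<le> 1 / exp (2::real)" by (intro divide_left_mono) auto
  then show ?thesis by (simp add: exp_minus field_simps)
qed

lemma sqrt2pi: "sqrt (2 * pi) \<le> 3"
proof -
  have "2 * pi \<le> 3\<^sup>2" using pi_less_4 by simp
  then show ?thesis by (metis real_sqrt_le_iff real_sqrt_pow2_iff zero_le_numeral real_sqrt_unique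
      abs_of_nonneg real_sqrt_abs)
qed

lemma normal_lower:
  assumes s: "1 \<le> s" and v: "\<bar>v\<bar> \<le> 2 * s"
  shows "1 / (27 * s) \<le> normal_density 0 s v"
proof -
  have sp: "0 < s" using s by simp
  have sq: "sqrt (2 * pi * s\<^sup>2) = sqrt (2 * pi) * s"
    using sp by (simp add: real_sqrt_mult)
  have "v\<^sup>2 \<le> (2 * s)\<^sup>2" using v by (metis abs_le_square_iff abs_of_nonneg sp less_le mult_nonneg_nonneg zero_le_numeral)
  then have "v\<^sup>2 / (2 * s\<^sup>2) \<le> 2" using sp by (simp add: field_simps power2_eq_square)
  then have "exp (-2) \<le> exp (- v\<^sup>2 / (2 * s\<^sup>2))" by simp
  then have e: "1/9 \<le> exp (- v\<^sup>2 / (2 * s\<^sup>2))" using exp_neg2 by linarith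
  have d: "1 / (3 * s) \<le> 1 / sqrt (2 * pi * s\<^sup>2)"
    unfolding sq using sp sqrt2pi by (intro divide_left_mono mult_right_mono mult_pos_pos) auto
  have "1 / (27 * s) = 1 / (3 * s) * (1/9)" by simp
  also have "\<dots> \<le> 1 / sqrt (2 * pi * s\<^sup>2) * exp (- v\<^sup>2 / (2 * s\<^sup>2))"
    using d e sp by (intro mult_mono) auto
  finally show ?thesis unfolding normal_density_def by simp
qed


lemma coord_measure:
  assumes k: "k \<in> Idx n d" and S: "S \<in> sets (MM k)"
  shows "measure (PP n d) {x\<in>space (PP n d). x k \<in> S} = measure (MM k) S"
proof -
  have f: "(\<lambda>x. x k) \<in> measurable (PP n d) (MM k)"
    unfolding PP_def using k by (rule measurable_component_singleton)
  have "measure (MM k) S = measure (distr (PP n d) (MM k) (\<lambda>x. x k)) S"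
    unfolding PP_def using k by (subst distr_PiM_component) auto
  also have "\<dots> = measure (PP n d) ((\<lambda>x. x k) -` S \<inter> space (PP n d))"
    using f S by (rule measure_distr)
  finally show ?thesis by (simp add: Int_def conj_commute)
qed

lemma coord_normal:
  assumes k: "k \<in> Idx n d" and g: "MM k = std_gauss"
  shows "distributed (PP n d) lborel (\<lambda>x. x k) (\<lambda>v. ennreal (std_normal_density v))"
  unfolding distributed_def
proof (intro conjI)
  have f: "(\<lambda>x. x k) \<in> measurable (PP n d) (MM k)"
    unfolding PP_def using k by (rule measurable_component_singleton)
  then show fb: "(\<lambda>x. x k) \<in> measurable (PP n d) lborel"
    using g by (simp add: measurable_cong_sets[OF refl sets_gauss])
  show "(\<lambda>v. ennreal (std_normal_density v)) \<in> borel_measurable lborel" by simp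
  show "distr (PP n d) lborel (\<lambda>x. x k) = density lborel (\<lambda>v. ennreal (std_normal_density v))"
  proof (rule measure_eqI)
    show "sets (distr (PP n d) lborel (\<lambda>x. x k)) = sets (density lborel (\<lambda>v. ennreal (std_normal_density v)))" by simp
    fix A assume A: "A \<in> sets (distr (PP n d) lborel (\<lambda>x. x k))"
    then have A': "A \<in> sets (MM k)" using g by simp
    have "emeasure (distr (PP n d) lborel (\<lambda>x. x k)) A = emeasure (PP n d) ((\<lambda>x. x k) -` A \<inter> space (PP n d))"
      using A fb by (intro emeasure_distr) auto
    also have "\<dots> = emeasure (distr (PP n d) (MM k) (\<lambda>x. x k)) A"
      using A' f by (intro emeasure_distr[symmetric]) auto
    also have "\<dots> = emeasure (MM k) A"
      unfolding PP_def using k by (subst distr_PiM_component) auto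
    finally show "emeasure (distr (PP n d) lborel (\<lambda>x. x k)) A = emeasure (density lborel (\<lambda>v. ennreal (std_normal_density v))) A"
      using g by (simp add: std_gauss_def)
  qed
qed

lemma Z_normal:
  fixes b :: "nat \<Rightarrow> real"
  assumes i: "i < n" and j: "j < d"
  defines "L \<equiv> {l. l < d \<and> l \<noteq> j \<and> b l \<noteq> 0}"
  shows "distributed (PP n d) lborel (\<lambda>x. (\<Sum>l\<in>L. b l * x (Inl (i, l))) + x (Inr (Inl i)))
           (\<lambda>v. ennreal (normal_density 0 (sqrt (1 + (\<Sum>l\<in>L. (b l)\<^sup>2))) v))"
proof -
  interpret prob_space "PP n d" by simp
  have n0: "n > 0" "d > 0" using i j by auto
  define J :: "idx set" where "J = insert (Inr (Inl i)) ((\<lambda>l. Inl (i, l)) ` L)"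
  define cf where "cf k = (case k of Inl p \<Rightarrow> b (snd p) | Inr _ \<Rightarrow> 1)" for k :: idx
  have finL: "finite L" unfolding L_def by simp
  have JI: "J \<subseteq> Idx n d" using i unfolding J_def L_def Idx_def by auto
  have finJ: "finite J" unfolding J_def using finL by simp
  have cfnz: "cf k \<noteq> 0" if "k \<in> J" for k
    using that unfolding J_def L_def cf_def by auto
  have gJ: "MM k = std_gauss" if "k \<in> J" for k
    using that unfolding J_def by auto
  have ind: "indep_vars (\<lambda>_. borel) (\<lambda>k x. cf k * x k) J"
  proof -
    have "indep_vars MM (\<lambda>k x. x k) J"
      by (rule indep_vars_subset[OF coord_indep[OF n0] JI])
    then have "indep_vars (\<lambda>_. borel) (\<lambda>k x. (\<lambda>v. cf k * v) (x k)) J"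
      by (rule indep_vars_compose2) (auto intro!: comp_MM_borel)
    then show ?thesis by simp
  qed
  have dist: "distributed (PP n d) lborel (\<lambda>x. cf k * x k) (\<lambda>v. ennreal (normal_density 0 \<bar>cf k\<bar> v))"
    if k: "k \<in> J" for k
  proof -
    have "distributed (PP n d) lborel (\<lambda>x. 0 + cf k * x k) (\<lambda>v. ennreal (normal_density (0 + cf k * 0) (\<bar>cf k\<bar> * 1) v))"
      using JI k gJ[OF k] cfnz[OF k] by (intro normal_density_affine coord_normal) auto
    then show ?thesis by simp
  qed
  have "distributed (PP n d) lborel (\<lambda>x. \<Sum>k\<in>J. cf k * x k) (\<lambda>v. ennreal (normal_density (\<Sum>k\<in>J. 0) (sqrt (\<Sum>k\<in>J. \<bar>cf k\<bar>\<^sup>2)) v))"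
    using finJ ind dist cfnz by (intro sum_indep_normal) (auto simp: J_def)
  moreover have "(\<lambda>x. \<Sum>k\<in>J. cf k * x k) = (\<lambda>x. (\<Sum>l\<in>L. b l * x (Inl (i, l))) + x (Inr (Inl i)))"
  proof
    fix x
    have "(\<Sum>k\<in>J. cf k * x k) = cf (Inr (Inl i)) * x (Inr (Inl i)) + (\<Sum>k\<in>(\<lambda>l. Inl (i, l)) ` L. cf k * x k)"
      unfolding J_def using finL by (subst sum.insert) auto
    also have "(\<Sum>k\<in>(\<lambda>l. Inl (i, l)) ` L. cf k * x k) = (\<Sum>l\<in>L. b l * x (Inl (i, l)))"
      by (subst sum.reindex) (auto simp: inj_on_def cf_def)
    finally show "(\<Sum>k\<in>J. cf k * x k) = (\<Sum>l\<in>L. b l * x (Inl (i, l))) + x (Inr (Inl i))"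
      by (simp add: cf_def)
  qed
  moreover have "(\<Sum>k\<in>J. \<bar>cf k\<bar>\<^sup>2) = 1 + (\<Sum>l\<in>L. (b l)\<^sup>2)"
  proof -
    have "(\<Sum>k\<in>J. \<bar>cf k\<bar>\<^sup>2) = \<bar>cf (Inr (Inl i))\<bar>\<^sup>2 + (\<Sum>k\<in>(\<lambda>l. Inl (i, l)) ` L. \<bar>cf k\<bar>\<^sup>2)"
      unfolding J_def using finL by (subst sum.insert) auto
    also have "(\<Sum>k\<in>(\<lambda>l. Inl (i, l)) ` L. \<bar>cf k\<bar>\<^sup>2) = (\<Sum>l\<in>L. (b l)\<^sup>2)"
      by (subst sum.reindex) (auto simp: inj_on_def cf_def)
    finally show ?thesis by (simp add: cf_def)
  qed
  ultimately show ?thesis by simp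
qed

lemma measure_ge_from_emeasure:
  assumes "finite_measure M" "ennreal c \<le> emeasure M A"
  shows "c \<le> measure M A"
proof (cases "c \<le> 0")
  case True then show ?thesis by (meson measure_nonneg order_trans)
next
  case False
  interpret finite_measure M by fact
  have "ennreal c \<le> ennreal (measure M A)" using assms(2) by (simp add: emeasure_eq_measure)
  then show ?thesis using False by (simp add: ennreal_le_iff)
qed

lemma rad_half: "measure rademacher {1} = 1/2"
proof -
  have "measure rademacher {1} = real (card ({-1, 1} \<inter> {1::real})) / real (card {-1, 1::real})"
    unfolding rademacher_def by (rule measure_pmf_of_set) auto
  also have "\<dots> = 1/2" by simp
  finally show ?thesis .
qed

lemma prob_sigma1:
  assumes i: "i < n"
  shows "measure (PP n d) {x\<in>space (PP n d). x (Inr (Inr i)) = 1} = 1/2"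
proof -
  have k: "Inr (Inr i) \<in> Idx n d" using i by (auto simp: Idx_def)
  have "measure (PP n d) {x\<in>space (PP n d). x (Inr (Inr i)) \<in> {1}} = measure (MM (Inr (Inr i))) {1}"
    by (rule coord_measure[OF k]) simp
  then show ?thesis using rad_half by simp
qed

lemma prob_Xbig:
  assumes i: "i < n" and j: "j < d"
  shows "1/54 \<le> measure (PP n d) {x\<in>space (PP n d). 1/2 \<le> \<bar>x (Inl (i, j))\<bar>}"
proof -
  have k: "Inl (i, j) \<in> Idx n d" using i j by (auto simp: Idx_def)
  have S: "{v::real. 1/2 \<le> \<bar>v\<bar>} \<in> sets borel" by measurable
  have eq: "measure (PP n d) {x\<in>space (PP n d). x (Inl (i, j)) \<in> {v. 1/2 \<le> \<bar>v\<bar>}} = measure std_gauss {v. 1/2 \<le> \<bar>v\<bar>}"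
    using coord_measure[OF k, of "{v. 1/2 \<le> \<bar>v\<bar>}"] S by simp
  have "ennreal (1/27 * (1 - 1/2)) \<le> (\<integral>\<^sup>+v. ennreal (normal_density 0 1 v) * indicator {v. 1/2 \<le> \<bar>v\<bar>} v \<partial>lborel)"
  proof (rule nn_interval_lower)
    fix v :: real assume v: "1/2 \<le> v" "v \<le> 1"
    then have "\<bar>v\<bar> \<le> 2 * 1" by simp
    from normal_lower[OF _ this] show "1/27 \<le> normal_density 0 1 v" by simp
  qed auto
  also have "\<dots> = emeasure std_gauss {v. 1/2 \<le> \<bar>v\<bar>}"
    unfolding std_gauss_def using S by (simp add: emeasure_density)
  finally have "1/27 * (1 - 1/2) \<le> measure std_gauss {v. 1/2 \<le> \<bar>v\<bar>}"
    by (intro measure_ge_from_emeasure) (auto intro: prob_space.finite_measure)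
  then show ?thesis using eq by simp
qed

lemma prob_Zsmall:
  fixes b e :: "nat \<Rightarrow> real"
  assumes i: "i < n" and j: "j < d" and e: "\<bar>e i\<bar> \<le> 1" and u: "0 \<le> u"
  defines "L \<equiv> {l. l < d \<and> l \<noteq> j \<and> b l \<noteq> 0}"
  defines "s \<equiv> sqrt (1 + (\<Sum>l\<in>L. (b l)\<^sup>2))"
  shows "2 * min u s / (27 * s) \<le> measure (PP n d)
           {x\<in>space (PP n d). \<bar>(\<Sum>l\<in>L. b l * x (Inl (i, l))) + x (Inr (Inl i)) + e i\<bar> \<le> u}"
proof -
  let ?Z = "\<lambda>x. (\<Sum>l\<in>L. b l * x (Inl (i, l))) + x (Inr (Inl i))"
  have dist: "distributed (PP n d) lborel ?Z (\<lambda>v. ennreal (normal_density 0 s v))"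
    unfolding s_def L_def by (rule Z_normal[OF i j])
  have s1: "1 \<le> s" unfolding s_def by (simp add: sum_nonneg)
  define u' where "u' = min u s"
  have u': "0 \<le> u'" "u' \<le> u" "u' \<le> s" using u s1 unfolding u'_def by auto
  have S: "{v::real. \<bar>v + e i\<bar> \<le> u} \<in> sets borel" by measurable
  have pre: "?Z -` {v. \<bar>v + e i\<bar> \<le> u} \<inter> space (PP n d) = {x\<in>space (PP n d). \<bar>?Z x + e i\<bar> \<le> u}"
    by auto
  have "ennreal (1 / (27 * s) * ((- e i + u') - (- e i - u'))) \<le>
      (\<integral>\<^sup>+v. ennreal (normal_density 0 s v) * indicator {v. \<bar>v + e i\<bar> \<le> u} v \<partial>lborel)"
  proof (rule nn_interval_lower)
    show "- e i - u' \<le> - e i + u'" using u' by simp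
    show "0 \<le> 1 / (27 * s)" using s1 by simp
    show "{- e i - u'..- e i + u'} \<subseteq> {v. \<bar>v + e i\<bar> \<le> u}" using u' by auto
    fix v assume v: "- e i - u' \<le> v" "v \<le> - e i + u'"
    have "\<bar>v\<bar> \<le> 2 * s" using v e u' s1 by linarith
    then show "1 / (27 * s) \<le> normal_density 0 s v" by (rule normal_lower[OF s1])
  qed
  also have "\<dots> = emeasure (PP n d) (?Z -` {v. \<bar>v + e i\<bar> \<le> u} \<inter> space (PP n d))"
    by (rule distributed_emeasure[OF dist, symmetric]) (use S in simp)
  finally have "1 / (27 * s) * ((- e i + u') - (- e i - u')) \<le> measure (PP n d) (?Z -` {v. \<bar>v + e i\<bar> \<le> u} \<inter> space (PP n d))"
    by (intro measure_ge_from_emeasure) (auto intro: prob_space.finite_measure)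
  then show ?thesis unfolding pre u'_def by (simp add: field_simps)
qed


lemma restrict_space_PiM:
  "x \<in> space (PP n d) \<Longrightarrow> restrict x K \<in> space (PiM K MM)"
  by (simp add: space_PiM)

lemma mid_lower:
  fixes b e :: "nat \<Rightarrow> real"
  assumes i: "i < n" and j: "j < d" and e: "\<bar>e i\<bar> \<le> 1" and t: "0 \<le> t"
  defines "L \<equiv> {l. l < d \<and> l \<noteq> j \<and> b l \<noteq> 0}"
  defines "s \<equiv> sqrt (1 + (\<Sum>l\<in>L. (b l)\<^sup>2))"
  shows "min (t/2) s / (1458 * s) \<le> measure (PP n d) {x\<in>space (PP n d). inM j x i \<and> \<bar>rr d b e j x i - b j\<bar> \<le> t}"
proof -
  interpret prob_space "PP n d" by simp
  have n0: "n > 0" "d > 0" using i j by auto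
  let ?Z = "\<lambda>x. (\<Sum>l\<in>L. b l * x (Inl (i, l))) + x (Inr (Inl i))"
  define A where "A = {x\<in>space (PP n d). x (Inr (Inr i)) = 1}"
  define B where "B = {x\<in>space (PP n d). 1/2 \<le> \<bar>x (Inl (i, j))\<bar>}"
  define C where "C = {x\<in>space (PP n d). \<bar>?Z x + e i\<bar> \<le> t/2}"
  define T where "T = {x\<in>space (PP n d). inM j x i \<and> \<bar>rr d b e j x i - b j\<bar> \<le> t}"
  have finL: "finite L" unfolding L_def by simp
  have yv_split: "yv d b e x i = x (Inl (i, j)) * b j + (\<Sum>l\<in>L. b l * x (Inl (i, l))) + e i" for x
  proof -
    have "(\<Sum>l<d. x (Inl (i, l)) * b l) = x (Inl (i, j)) * b j + (\<Sum>l\<in>{..<d} - {j}. x (Inl (i, l)) * b l)"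
      using j by (subst sum.remove[of _ j]) auto
    also have "(\<Sum>l\<in>{..<d} - {j}. x (Inl (i, l)) * b l) = (\<Sum>l\<in>L. b l * x (Inl (i, l)))"
      by (rule sum.mono_neutral_cong_right) (auto simp: L_def)
    finally show ?thesis unfolding yv_def by simp
  qed
  have sub: "A \<inter> B \<inter> C \<subseteq> T"
  proof
    fix x assume x: "x \<in> A \<inter> B \<inter> C"
    then have s1: "x (Inr (Inr i)) = 1" and xb: "1/2 \<le> \<bar>x (Inl (i, j))\<bar>" and zc: "\<bar>?Z x + e i\<bar> \<le> t/2"
      and xs: "x \<in> space (PP n d)"
      unfolding A_def B_def C_def by auto
    have M: "inM j x i" unfolding inM_def using s1 xb by simp
    have nz: "x (Inl (i, j)) \<noteq> 0" using xb by auto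
    have "rr d b e j x i - b j = (?Z x + e i) / x (Inl (i, j))"
      unfolding rr_def s1 yv_split using nz by (simp add: field_simps)
    then have "\<bar>rr d b e j x i - b j\<bar> = \<bar>?Z x + e i\<bar> / \<bar>x (Inl (i, j))\<bar>" by (simp add: abs_divide)
    also have "\<dots> \<le> t"
    proof -
      have "\<bar>?Z x + e i\<bar> \<le> t * \<bar>x (Inl (i, j))\<bar>"
      proof -
        have "t / 2 \<le> t * \<bar>x (Inl (i, j))\<bar>" using t xb by (metis mult.commute mult_left_mono divide_inverse inverse_eq_divide mult_1 times_divide_eq_right)
        then show ?thesis using zc by linarith
      qed
      then show ?thesis using nz by (simp add: divide_le_eq)
    qed
    finally show "x \<in> T" unfolding T_def using M xs by simp
  qed
  define K :: "nat \<Rightarrow> idx set" where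
    "K m = (if m = 0 then {Inr (Inr i)} else if m = 1 then {Inl (i, j)} else insert (Inr (Inl i)) ((\<lambda>l. Inl (i, l)) ` L))" for m
  have Ksub: "K m \<subseteq> Idx n d" if "m \<in> {0,1,2}" for m
    using that i j unfolding K_def L_def Idx_def by auto
  have disj: "disjoint_family_on K {0, 1, 2}"
    unfolding disjoint_family_on_def K_def L_def by auto
  have ind: "indep_vars (\<lambda>m. PiM (K m) MM) (\<lambda>m x. restrict (\<lambda>k. x k) (K m)) {0, 1, 2::nat}"
    by (rule indep_vars_restrict[OF coord_indep[OF n0] Ksub disj])
  define A' :: "nat \<Rightarrow> (idx \<Rightarrow> real) set" where "A' m = (if m = 0 then {y \<in> space (PiM (K 0) MM). y (Inr (Inr i)) = 1}
     else if m = 1 then {y \<in> space (PiM (K 1) MM). 1/2 \<le> \<bar>y (Inl (i, j))\<bar>}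
     else {y \<in> space (PiM (K 2) MM). \<bar>(\<Sum>l\<in>L. b l * y (Inl (i, l))) + y (Inr (Inl i)) + e i\<bar> \<le> t/2})" for m
  have A'sets: "A' m \<in> sets (PiM (K m) MM)" if "m \<in> {0, 1, 2}" for m
  proof -
    have c0: "(\<lambda>y. y (Inr (Inr i))) \<in> borel_measurable (PiM (K 0) MM)" by (rule coord_borel) (simp add: K_def)
    have c1: "(\<lambda>y. y (Inl (i, j))) \<in> borel_measurable (PiM (K 1) MM)" by (rule coord_borel) (simp add: K_def)
    have c2: "(\<lambda>y. y (Inr (Inl i))) \<in> borel_measurable (PiM (K 2) MM)" by (rule coord_borel) (simp add: K_def)
    have c3: "(\<lambda>y. y (Inl (i, l))) \<in> borel_measurable (PiM (K 2) MM)" if "l \<in> L" for l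
      using that by (intro coord_borel) (simp add: K_def)
    have "(\<lambda>y. (\<Sum>l\<in>L. b l * y (Inl (i, l))) + y (Inr (Inl i)) + e i) \<in> borel_measurable (PiM (K 2) MM)"
      using c2 c3 by (intro borel_measurable_add borel_measurable_sum borel_measurable_times) auto
    then show ?thesis using that c0 c1 unfolding A'_def by (auto intro!: predE[OF pred_intros_logic(1)] ; measurable)
  qed
  have pre: "(\<lambda>x. restrict (\<lambda>k. x k) (K m)) -` A' m \<inter> space (PP n d) = (if m = 0 then A else if m = 1 then B else C)"
    if "m \<in> {0, 1, 2}" for m
    using that unfolding A'_def A_def B_def C_def
    by (auto simp: K_def restrict_space_PiM)
  have "prob (\<Inter>m\<in>{0,1,2}. (\<lambda>x. restrict (\<lambda>k. x k) (K m)) -` A' m \<inter> space (PP n d))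
     = (\<Prod>m\<in>{0,1,2}. prob ((\<lambda>x. restrict (\<lambda>k. x k) (K m)) -` A' m \<inter> space (PP n d)))"
    by (rule indep_varsD_finite[OF ind]) (use A'sets in auto)
  also have "(\<Prod>m\<in>{0,1,2::nat}. prob ((\<lambda>x. restrict (\<lambda>k. x k) (K m)) -` A' m \<inter> space (PP n d)))
     = (\<Prod>m\<in>{0,1,2::nat}. prob (if m = 0 then A else if m = 1 then B else C))"
    by (intro prod.cong refl) (simp only: pre)
  also have "\<dots> = prob A * prob B * prob C" by simp
  finally have prodeq: "prob (A \<inter> B \<inter> C) = prob A * prob B * prob C"
  proof -
    assume h: "prob (\<Inter>m\<in>{0,1,2}. (\<lambda>x. restrict (\<lambda>k. x k) (K m)) -` A' m \<inter> space (PP n d)) = prob A * prob B * prob C"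
    have "(\<Inter>m\<in>{0,1,2::nat}. (\<lambda>x. restrict (\<lambda>k. x k) (K m)) -` A' m \<inter> space (PP n d)) = A \<inter> B \<inter> C"
      using pre by (auto simp: Int_assoc)
    with h show ?thesis by simp
  qed
  have pA: "prob A = 1/2" unfolding A_def by (rule prob_sigma1[OF i])
  have pB: "1/54 \<le> prob B" unfolding B_def by (rule prob_Xbig[OF i j])
  have pC: "2 * min (t/2) s / (27 * s) \<le> prob C"
    unfolding C_def s_def L_def using t by (intro prob_Zsmall[where b=b and e=e, OF i j e]) auto
  have s1: "1 \<le> s" unfolding s_def by (simp add: sum_nonneg)
  have "min (t/2) s / (1458 * s) = 1/2 * (1/54) * (2 * min (t/2) s / (27 * s))" by simp
  also have "\<dots> \<le> prob A * prob B * prob C"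
    using pA pB pC s1 t by (intro mult_mono) auto
  also have "\<dots> = prob (A \<inter> B \<inter> C)" using prodeq by simp
  also have "\<dots> \<le> prob T"
  proof -
    note m = D_meas1[OF i j, where b=b and e=e] D_meas2[OF i j]
    have "T \<in> events" unfolding T_def using m by measurable
    then show ?thesis using sub by (intro finite_measure_mono) auto
  qed
  finally show ?thesis unfolding T_def .
qed

lemma (in prob_space) hoeff_gen:
  fixes X :: "'i \<Rightarrow> 'a \<Rightarrow> real"
  assumes fin: "finite I" and cI: "card I = n" and n: "n > 0"
    and ind: "indep_vars (\<lambda>_. borel) X I"
    and bnd: "\<And>i x. i \<in> I \<Longrightarrow> x \<in> space M \<Longrightarrow> X i x \<in> {-1..1}"
    and ex: "(\<Sum>i\<in>I. expectation (X i)) \<le> - \<epsilon>" and eps: "0 \<le> \<epsilon>"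
  shows "prob {x\<in>space M. 0 \<le> (\<Sum>i\<in>I. X i x)} \<le> exp (- \<epsilon>\<^sup>2 / (2 * n))"
proof -
  interpret H: Hoeffding_ineq M I X "\<lambda>_. -1" "\<lambda>_. 1" "\<Sum>i\<in>I. expectation (X i)"
    by unfold_locales (use fin ind bnd in \<open>auto intro!: AE_I2\<close>)
  have s: "(\<Sum>i\<in>I. ((1::real) - (-1))\<^sup>2) = 4 * n" using cI by simp
  have "prob {x\<in>space M. 0 \<le> (\<Sum>i\<in>I. X i x)} \<le> prob {x\<in>space M. (\<Sum>i\<in>I. X i x) \<ge> (\<Sum>i\<in>I. expectation (X i)) + \<epsilon>}"
  proof (rule finite_measure_mono)
    show "{x\<in>space M. 0 \<le> (\<Sum>i\<in>I. X i x)} \<subseteq> {x\<in>space M. (\<Sum>i\<in>I. X i x) \<ge> (\<Sum>i\<in>I. expectation (X i)) + \<epsilon>}"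
      using ex by auto
    have "(\<lambda>x. \<Sum>i\<in>I. X i x) \<in> borel_measurable M"
      using H.random_variable by (intro borel_measurable_sum) auto
    then show "{x\<in>space M. (\<Sum>i\<in>I. X i x) \<ge> (\<Sum>i\<in>I. expectation (X i)) + \<epsilon>} \<in> events"
      by measurable
  qed
  also have "\<dots> \<le> exp (-2 * \<epsilon>\<^sup>2 / (\<Sum>i\<in>I. ((1::real) - (-1))\<^sup>2))"
    by (rule H.Hoeffding_ineq_ge) (use eps s n in auto)
  also have "\<dots> = exp (- \<epsilon>\<^sup>2 / (2 * n))" unfolding s by (simp add: field_simps)
  finally show ?thesis .
qed

lemma Vup_local:
  assumes j: "j < d" and eq: "\<And>k. k \<in> Krow d i \<Longrightarrow> y k = x k"
  shows "Vup d b e j a i y = Vup d b e j a i x" "Vdn d b e j a i y = Vdn d b e j a i x"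
proof -
  have "yv d b e y i = yv d b e x i" unfolding yv_def
    using eq by (intro arg_cong2[where f="(+)"] sum.cong) (auto simp: Krow_def)
  moreover have "y (Inr (Inr i)) = x (Inr (Inr i))" "y (Inr (Inl i)) = x (Inr (Inl i))" "y (Inl (i, j)) = x (Inl (i, j))"
    using eq j by (auto simp: Krow_def)
  ultimately have "rr d b e j y i = rr d b e j x i" "inM j y i = inM j x i"
    unfolding rr_def inM_def by simp_all
  then show "Vup d b e j a i y = Vup d b e j a i x" "Vdn d b e j a i y = Vdn d b e j a i x"
    unfolding Vup_def Vdn_def by simp_all
qed

lemma V_indep:
  assumes n: "n > 0" and j: "j < d"
  shows "prob_space.indep_vars (PP n d) (\<lambda>_. borel) (\<lambda>i. Vup d b e j a i) {..<n}"
    and "prob_space.indep_vars (PP n d) (\<lambda>_. borel) (\<lambda>i. Vdn d b e j a i) {..<n}"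
proof -
  interpret prob_space "PP n d" by simp
  have d0: "d > 0" using j by simp
  have mup: "(\<lambda>y. Vup d b e j a i y) \<in> borel_measurable (PiM (Krow d i) MM)" for i
  proof -
    note m = rr_meas[where i=i and b=b and e=e and K="Krow d i", OF subset_refl j] inM_meas[where i=i and K="Krow d i", OF subset_refl j]
    show ?thesis unfolding Vup_def using m by measurable
  qed
  have mdn: "(\<lambda>y. Vdn d b e j a i y) \<in> borel_measurable (PiM (Krow d i) MM)" for i
  proof -
    note m = rr_meas[where i=i and b=b and e=e and K="Krow d i", OF subset_refl j] inM_meas[where i=i and K="Krow d i", OF subset_refl j]
    show ?thesis unfolding Vdn_def using m by measurable
  qed
  have "indep_vars (\<lambda>_. borel) (\<lambda>i x. Vup d b e j a i (restrict x (Krow d i))) {..<n}"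
    by (rule indep_vars_compose2[OF row_indep[OF n d0]]) (use mup in auto)
  moreover have "(\<lambda>i x. Vup d b e j a i (restrict x (Krow d i))) = (\<lambda>i. Vup d b e j a i)"
  proof (intro ext)
    fix i x show "Vup d b e j a i (restrict x (Krow d i)) = Vup d b e j a i x"
      by (rule Vup_local(1)[OF j]) simp
  qed
  ultimately show "indep_vars (\<lambda>_. borel) (\<lambda>i. Vup d b e j a i) {..<n}" by simp
  have "indep_vars (\<lambda>_. borel) (\<lambda>i x. Vdn d b e j a i (restrict x (Krow d i))) {..<n}"
    by (rule indep_vars_compose2[OF row_indep[OF n d0]]) (use mdn in auto)
  moreover have "(\<lambda>i x. Vdn d b e j a i (restrict x (Krow d i))) = (\<lambda>i. Vdn d b e j a i)"
  proof (intro ext)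
    fix i x show "Vdn d b e j a i (restrict x (Krow d i)) = Vdn d b e j a i x"
      by (rule Vup_local(2)[OF j]) simp
  qed
  ultimately show "indep_vars (\<lambda>_. borel) (\<lambda>i. Vdn d b e j a i) {..<n}" by simp
qed

lemma fail_bound:
  fixes b e :: "nat \<Rightarrow> real"
  assumes n: "n > 0" and j: "j < d" and t: "0 \<le> t" and \<alpha>: "0 \<le> \<alpha>"
    and G: "\<alpha> * real n \<le> real (card {i. i < n \<and> \<bar>e i\<bar> \<le> 1})"
    and \<delta>: "0 \<le> \<delta>"
    and mid: "\<And>i. i < n \<Longrightarrow> \<bar>e i\<bar> \<le> 1 \<Longrightarrow> \<delta> \<le> measure (PP n d) {x\<in>space (PP n d). inM j x i \<and> \<bar>rr d b e j x i - b j\<bar> \<le> t}"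
  shows "measure (PP n d) {x\<in>space (PP n d). 0 \<le> (\<Sum>i<n. Vup d b e j (b j + t) i x)} \<le> exp (- (\<delta> * \<alpha> * n)\<^sup>2 / (2 * n))"
    and "measure (PP n d) {x\<in>space (PP n d). 0 \<le> (\<Sum>i<n. Vdn d b e j (b j - t) i x)} \<le> exp (- (\<delta> * \<alpha> * n)\<^sup>2 / (2 * n))"
proof -
  interpret prob_space "PP n d" by simp
  let ?mid = "\<lambda>i. prob {x\<in>space (PP n d). inM j x i \<and> \<bar>rr d b e j x i - b j\<bar> \<le> t}"
  define Gs where "Gs = {i. i < n \<and> \<bar>e i\<bar> \<le> 1}"
  have "\<delta> * \<alpha> * n \<le> \<delta> * real (card Gs)" using G \<delta> unfolding Gs_def by (simp add: mult.assoc mult_left_mono)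
  also have "\<dots> = (\<Sum>i\<in>Gs. \<delta>)" by simp
  also have "\<dots> \<le> (\<Sum>i\<in>Gs. ?mid i)" using mid by (intro sum_mono) (auto simp: Gs_def)
  also have "\<dots> \<le> (\<Sum>i<n. ?mid i)" by (rule sum_mono2) (auto simp: Gs_def)
  finally have key: "\<delta> * \<alpha> * n \<le> (\<Sum>i<n. ?mid i)" .
  have eps: "0 \<le> \<delta> * \<alpha> * n" using \<delta> \<alpha> by simp
  show "prob {x\<in>space (PP n d). 0 \<le> (\<Sum>i<n. Vup d b e j (b j + t) i x)} \<le> exp (- (\<delta> * \<alpha> * n)\<^sup>2 / (2 * n))"
  proof (rule hoeff_gen)
    show "indep_vars (\<lambda>_. borel) (\<lambda>i. Vup d b e j (b j + t) i) {..<n}" by (rule V_indep(1)[OF n j])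
    show "(\<Sum>i<n. expectation (Vup d b e j (b j + t) i)) \<le> - (\<delta> * \<alpha> * n)"
      using key by (simp add: expect_V(1)[OF _ j t] sum_negf)
  qed (use n eps in \<open>auto simp: Vup_def\<close>)
  show "prob {x\<in>space (PP n d). 0 \<le> (\<Sum>i<n. Vdn d b e j (b j - t) i x)} \<le> exp (- (\<delta> * \<alpha> * n)\<^sup>2 / (2 * n))"
  proof (rule hoeff_gen)
    show "indep_vars (\<lambda>_. borel) (\<lambda>i. Vdn d b e j (b j - t) i) {..<n}" by (rule V_indep(2)[OF n j])
    show "(\<Sum>i<n. expectation (Vdn d b e j (b j - t) i)) \<le> - (\<delta> * \<alpha> * n)"
      using key by (simp add: expect_V(2)[OF _ j t] sum_negf)
  qed (use n eps in \<open>auto simp: Vdn_def\<close>)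
qed

lemma FF_coords:
  assumes i: "i < n"
  shows "l < d \<Longrightarrow> FF n d ((X, w), \<sigma>) (Inl (i, l)) = X (i, l)"
    and "FF n d ((X, w), \<sigma>) (Inr (Inl i)) = w i"
    and "FF n d ((X, w), \<sigma>) (Inr (Inr i)) = \<sigma> i"
  using i by (auto simp: FF_def coordF_def Idx_def)

lemma cwm_link:
  fixes b e :: "nat \<Rightarrow> real" and X :: "nat \<times> nat \<Rightarrow> real" and w \<sigma> :: "nat \<Rightarrow> real" and n :: nat
  assumes j: "j < d"
  defines "x \<equiv> FF n d ((X, w), \<sigma>)"
  defines "y \<equiv> (\<lambda>i. (\<Sum>l<d. X (i, l) * b l) + e i)"
  shows "a < cwm n y X w \<sigma> j \<Longrightarrow> 0 \<le> (\<Sum>i<n. Vup d b e j a i x)"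
    and "cwm n y X w \<sigma> j < a \<Longrightarrow> 0 \<le> (\<Sum>i<n. Vdn d b e j a i x)"
proof -
  define M where "M = {i. i < n \<and> 1/2 \<le> \<bar>\<sigma> i * X (i, j)\<bar>}"
  define f where "f i = (\<sigma> i * y i + w i) / (\<sigma> i * X (i, j))" for i
  have Msub: "M \<subseteq> {..<n}" unfolding M_def by auto
  have cw: "cwm n y X w \<sigma> j = median_list (map f (sorted_list_of_set M))"
    unfolding cwm_def M_def f_def Let_def ..
  have c1: "x (Inr (Inr i)) = \<sigma> i" "x (Inr (Inl i)) = w i" "x (Inl (i, j)) = X (i, j)" if "i < n" for i
    unfolding x_def using FF_coords[OF that] j by auto
  have yv: "yv d b e x i = y i" if "i < n" for i
  proof -
    have "(\<Sum>l<d. x (Inl (i, l)) * b l) = (\<Sum>l<d. X (i, l) * b l)"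
      by (rule sum.cong) (simp_all add: x_def FF_coords(1)[OF that])
    then show ?thesis unfolding yv_def y_def by simp
  qed
  have coordsM: "(i \<in> M) = inM j x i" "f i = rr d b e j x i" if "i < n" for i
  proof -
    show "(i \<in> M) = inM j x i" unfolding M_def inM_def using that by (simp only: c1[OF that]) simp
    show "f i = rr d b e j x i" unfolding f_def rr_def by (simp only: c1[OF that] yv[OF that])
  qed
  show "a < cwm n y X w \<sigma> j \<Longrightarrow> 0 \<le> (\<Sum>i<n. Vup d b e j a i x)"
  proof -
    assume h: "a < cwm n y X w \<sigma> j"
    have "0 \<le> (\<Sum>i<n. (of_bool (i \<in> M \<and> f i > a) - of_bool (i \<in> M \<and> f i \<le> a) :: real))"
      using med_upper[OF Msub] h unfolding cw by simp
    also have "\<dots> = (\<Sum>i<n. Vup d b e j a i x)"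
      by (rule sum.cong) (auto simp: Vup_def coordsM)
    finally show ?thesis .
  qed
  show "cwm n y X w \<sigma> j < a \<Longrightarrow> 0 \<le> (\<Sum>i<n. Vdn d b e j a i x)"
  proof -
    assume h: "cwm n y X w \<sigma> j < a"
    have "0 \<le> (\<Sum>i<n. (of_bool (i \<in> M \<and> f i < a) - of_bool (i \<in> M \<and> f i \<ge> a) :: real))"
      using med_lower[OF Msub] h unfolding cw by simp
    also have "\<dots> = (\<Sum>i<n. Vdn d b e j a i x)"
      by (rule sum.cong) (auto simp: Vdn_def coordsM)
    finally show ?thesis .
  qed
qed


lemma exp_ln_bound:
  fixes d :: nat and z :: real
  shows "2 * real d * exp z \<le> 2 * exp (ln (real d) + z)"
proof (cases "d = 0")
  case True then show ?thesis by simp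
next
  case False
  then have "exp (ln (real d) + z) = real d * exp z" by (simp add: exp_add)
  then show ?thesis by simp
qed

lemma main_fixed:
  fixes n d k :: nat and \<beta>s \<eta> :: "nat \<Rightarrow> real" and \<alpha> \<tau> :: real
  assumes sp: "card {j. j < d \<and> \<beta>s j \<noteq> 0} \<le> k" and a0: "0 < \<alpha>" and a1: "\<alpha> \<le> 1"
    and G: "real (card {i. i < n \<and> \<bar>\<eta> i\<bar> \<le> 1}) \<ge> \<alpha> * real n"
    and t0: "0 < \<tau>" and tn: "\<tau> \<le> \<alpha>\<^sup>2 * real n"
  shows "\<exists>A \<in> sets (sample_space n d).
         measure (sample_space n d) A \<ge> 1 - 2 * exp (ln (real d) - (1 / 4251528) * \<tau>) \<and>
         A \<subseteq> {((X, w), \<sigma>). let y = (\<lambda>i. (\<Sum>j<d. X (i, j) * \<beta>s j) + \<eta> i);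
                                 \<beta>' = cwm n y X w \<sigma>
                             in \<forall>S \<in> top_k_sets d k \<beta>'.
                                  (\<Sum>j<d. (\<beta>s j - restrict_to S \<beta>' j)\<^sup>2)
                                  \<le> 20 * (real k * \<tau>) / (\<alpha>\<^sup>2 * real n)
                                      * (1 + (\<Sum>j<d. (\<beta>s j)\<^sup>2))}"
proof -
  interpret P: prob_space "PP n d" by simp
  have n0: "n > 0"
  proof (rule ccontr)
    assume "\<not> n > 0" then have "n = 0" by simp
    then show False using t0 tn by simp
  qed
  define q where "q = \<tau> / (\<alpha>\<^sup>2 * real n)"
  have q0: "0 < q" unfolding q_def using t0 a0 n0 by simp
  have q1: "q \<le> 1" unfolding q_def using tn a0 n0 by (simp add: divide_le_eq)
  have sq1: "sqrt q \<le> 1" using q1 by simp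
  have sq0: "0 \<le> sqrt q" using q0 by simp
  define sf where "sf = sqrt (1 + (\<Sum>l<d. (\<beta>s l)\<^sup>2))"
  have sf1: "1 \<le> sf" unfolding sf_def by (simp add: sum_nonneg)
  define t where "t = 2 * sf * sqrt q"
  have tnn: "0 \<le> t" unfolding t_def using sf1 sq0 by simp
  define \<delta> where "\<delta> = sqrt q / 1458"
  have \<delta>0: "0 \<le> \<delta>" unfolding \<delta>_def using sq0 by simp
  have mid: "\<delta> \<le> measure (PP n d) {x\<in>space (PP n d). inM j x i \<and> \<bar>rr d \<beta>s \<eta> j x i - \<beta>s j\<bar> \<le> t}"
    if j: "j < d" and i: "i < n" and e: "\<bar>\<eta> i\<bar> \<le> 1" for i j
  proof -
    define L where "L = {l. l < d \<and> l \<noteq> j \<and> \<beta>s l \<noteq> 0}"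
    define s where "s = sqrt (1 + (\<Sum>l\<in>L. (\<beta>s l)\<^sup>2))"
    have ml: "min (t/2) s / (1458 * s) \<le> measure (PP n d) {x\<in>space (PP n d). inM j x i \<and> \<bar>rr d \<beta>s \<eta> j x i - \<beta>s j\<bar> \<le> t}"
      unfolding s_def L_def by (rule mid_lower[where b=\<beta>s and e=\<eta>, OF i j e tnn])
    have s1: "1 \<le> s" unfolding s_def by (simp add: sum_nonneg)
    have ssf: "s \<le> sf"
    proof -
      have "(\<Sum>l\<in>L. (\<beta>s l)\<^sup>2) \<le> (\<Sum>l<d. (\<beta>s l)\<^sup>2)" by (rule sum_mono2) (auto simp: L_def)
      then show ?thesis unfolding s_def sf_def by simp
    qed
    have "s * sqrt q \<le> t / 2" unfolding t_def using ssf sq0 by (simp add: mult_right_mono)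
    moreover have "s * sqrt q \<le> s" using sq1 s1 by (simp add: mult_left_le)
    ultimately have "s * sqrt q \<le> min (t/2) s" by simp
    then have "s * sqrt q / (1458 * s) \<le> min (t/2) s / (1458 * s)"
      using s1 by (intro divide_right_mono) auto
    moreover have "s * sqrt q / (1458 * s) = \<delta>" unfolding \<delta>_def using s1 by simp
    ultimately show ?thesis using ml by linarith
  qed
  have ex: "(\<delta> * \<alpha> * real n)\<^sup>2 / (2 * real n) = \<tau> / 4251528"
  proof -
    have "(\<delta> * \<alpha> * real n)\<^sup>2 / (2 * real n) = q * \<alpha>\<^sup>2 * real n / 4251528"
      unfolding \<delta>_def using n0 q0 by (simp add: power_mult_distrib power2_eq_square field_simps)
    also have "\<dots> = \<tau> / 4251528" unfolding q_def using a0 n0 by simp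
    finally show ?thesis .
  qed
  define Fu where "Fu j = {x\<in>space (PP n d). 0 \<le> (\<Sum>i<n. Vup d \<beta>s \<eta> j (\<beta>s j + t) i x)}" for j
  define Fd where "Fd j = {x\<in>space (PP n d). 0 \<le> (\<Sum>i<n. Vdn d \<beta>s \<eta> j (\<beta>s j - t) i x)}" for j
  have Fb: "measure (PP n d) (Fu j) \<le> exp (- (1 / 4251528) * \<tau>) \<and> measure (PP n d) (Fd j) \<le> exp (- (1 / 4251528) * \<tau>)"
    if j: "j < d" for j
    using fail_bound[OF n0 j tnn less_imp_le[OF a0] G \<delta>0 mid[OF j]] unfolding Fu_def Fd_def by (simp add: ex)
  have Fs: "Fu j \<in> sets (PP n d) \<and> Fd j \<in> sets (PP n d)" if j: "j < d" for j
  proof -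
    have "\<forall>i\<in>{..<n}. Vup d \<beta>s \<eta> j (\<beta>s j + t) i \<in> borel_measurable (PP n d)"
      using V_indep(1)[OF n0 j, where b=\<beta>s and e=\<eta> and a="\<beta>s j + t"] unfolding P.indep_vars_def by blast
    then have m1: "(\<lambda>x. \<Sum>i<n. Vup d \<beta>s \<eta> j (\<beta>s j + t) i x) \<in> borel_measurable (PP n d)"
      by (intro borel_measurable_sum) auto
    have "\<forall>i\<in>{..<n}. Vdn d \<beta>s \<eta> j (\<beta>s j - t) i \<in> borel_measurable (PP n d)"
      using V_indep(2)[OF n0 j, where b=\<beta>s and e=\<eta> and a="\<beta>s j - t"] unfolding P.indep_vars_def by blast
    then have m2: "(\<lambda>x. \<Sum>i<n. Vdn d \<beta>s \<eta> j (\<beta>s j - t) i x) \<in> borel_measurable (PP n d)"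
      by (intro borel_measurable_sum) auto
    show ?thesis unfolding Fu_def Fd_def using m1 m2 by (intro conjI; measurable)
  qed
  define U where "U = (\<Union>j<d. Fu j \<union> Fd j)"
  have Us: "U \<in> sets (PP n d)" unfolding U_def using Fs by auto
  have "measure (PP n d) U \<le> (\<Sum>j<d. measure (PP n d) (Fu j \<union> Fd j))"
    unfolding U_def using Fs by (intro P.finite_measure_subadditive_finite) auto
  also have "\<dots> \<le> (\<Sum>j<d. 2 * exp (- (1 / 4251528) * \<tau>))"
  proof (rule sum_mono)
    fix j assume "j \<in> {..<d}"
    then have j: "j < d" by simp
    have "measure (PP n d) (Fu j \<union> Fd j) \<le> measure (PP n d) (Fu j) + measure (PP n d) (Fd j)"
      using Fs[OF j] by (intro measure_Un_le) auto
    then show "measure (PP n d) (Fu j \<union> Fd j) \<le> 2 * exp (- (1 / 4251528) * \<tau>)" using Fb[OF j] by linarith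
  qed
  also have "\<dots> = 2 * real d * exp (- (1 / 4251528) * \<tau>)" by simp
  also have "\<dots> \<le> 2 * exp (ln (real d) + - (1 / 4251528) * \<tau>)" by (rule exp_ln_bound)
  finally have Ub: "measure (PP n d) U \<le> 2 * exp (ln (real d) - (1 / 4251528) * \<tau>)" by simp
  define B where "B = space (PP n d) - U"
  have Bs: "B \<in> sets (PP n d)" unfolding B_def using Us by auto
  have Bm: "measure (PP n d) B = 1 - measure (PP n d) U" unfolding B_def using Us by (rule P.prob_compl)
  define A where "A = FF n d -` B \<inter> space (sample_space n d)"
  have As: "A \<in> sets (sample_space n d)" unfolding A_def using measurable_FF Bs by (rule measurable_sets)
  have Am: "measure (sample_space n d) A = measure (PP n d) B" unfolding A_def by (rule measure_sample_FF[OF Bs])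
  show ?thesis
  proof (rule bexI[OF _ As], rule conjI)
    show "1 - 2 * exp (ln (real d) - (1 / 4251528) * \<tau>) \<le> measure (sample_space n d) A"
      using Am Bm Ub by linarith
    show "A \<subseteq> {((X, w), \<sigma>). let y = (\<lambda>i. (\<Sum>j<d. X (i, j) * \<beta>s j) + \<eta> i);
                                 \<beta>' = cwm n y X w \<sigma>
                             in \<forall>S \<in> top_k_sets d k \<beta>'.
                                  (\<Sum>j<d. (\<beta>s j - restrict_to S \<beta>' j)\<^sup>2)
                                  \<le> 20 * (real k * \<tau>) / (\<alpha>\<^sup>2 * real n)
                                      * (1 + (\<Sum>j<d. (\<beta>s j)\<^sup>2))}"
    proof
      fix \<omega> assume \<omega>: "\<omega> \<in> A"
      obtain X w \<sigma> where \<omega>eq: "\<omega> = ((X, w), \<sigma>)" by (metis prod.collapse)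
      define x where "x = FF n d ((X, w), \<sigma>)"
      define y where "y = (\<lambda>i. (\<Sum>j<d. X (i, j) * \<beta>s j) + \<eta> i)"
      have xB: "x \<in> B" using \<omega> unfolding A_def x_def \<omega>eq by simp
      have err: "\<bar>cwm n y X w \<sigma> j - \<beta>s j\<bar> \<le> t" if j: "j < d" for j
      proof -
        have nu: "x \<notin> Fu j" and nd: "x \<notin> Fd j" and xs: "x \<in> space (PP n d)"
          using xB j unfolding B_def U_def by auto
        have "\<not> (\<beta>s j + t < cwm n y X w \<sigma> j)"
        proof
          assume h: "\<beta>s j + t < cwm n y X w \<sigma> j"
          have "0 \<le> (\<Sum>i<n. Vup d \<beta>s \<eta> j (\<beta>s j + t) i x)"
            using cwm_link(1)[OF j h[unfolded y_def]] unfolding x_def .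
          then show False using nu xs unfolding Fu_def by simp
        qed
        moreover have "\<not> (cwm n y X w \<sigma> j < \<beta>s j - t)"
        proof
          assume h: "cwm n y X w \<sigma> j < \<beta>s j - t"
          have "0 \<le> (\<Sum>i<n. Vdn d \<beta>s \<eta> j (\<beta>s j - t) i x)"
            using cwm_link(2)[OF j h[unfolded y_def]] unfolding x_def .
          then show False using nd xs unfolding Fd_def by simp
        qed
        ultimately show ?thesis by linarith
      qed
      have bound: "(\<Sum>j<d. (\<beta>s j - restrict_to S (cwm n y X w \<sigma>) j)\<^sup>2)
                    \<le> 20 * (real k * \<tau>) / (\<alpha>\<^sup>2 * real n) * (1 + (\<Sum>j<d. (\<beta>s j)\<^sup>2))"
        if S: "S \<in> top_k_sets d k (cwm n y X w \<sigma>)" for S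
      proof -
        have "(\<Sum>j<d. (\<beta>s j - restrict_to S (cwm n y X w \<sigma>) j)\<^sup>2) \<le> 5 * real k * t\<^sup>2"
          by (rule topk_bound[OF tnn err sp S])
        also have "t\<^sup>2 = 4 * (1 + (\<Sum>j<d. (\<beta>s j)\<^sup>2)) * q"
          unfolding t_def sf_def using q0 by (simp add: power_mult_distrib sum_nonneg)
        also have "5 * real k * (4 * (1 + (\<Sum>j<d. (\<beta>s j)\<^sup>2)) * q) = 20 * (real k * \<tau>) / (\<alpha>\<^sup>2 * real n) * (1 + (\<Sum>j<d. (\<beta>s j)\<^sup>2))"
          unfolding q_def by (simp add: field_simps)
        finally show ?thesis .
      qed
      show "\<omega> \<in> {((X, w), \<sigma>). let y = (\<lambda>i. (\<Sum>j<d. X (i, j) * \<beta>s j) + \<eta> i);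
                                 \<beta>' = cwm n y X w \<sigma>
                             in \<forall>S \<in> top_k_sets d k \<beta>'.
                                  (\<Sum>j<d. (\<beta>s j - restrict_to S \<beta>' j)\<^sup>2)
                                  \<le> 20 * (real k * \<tau>) / (\<alpha>\<^sup>2 * real n)
                                      * (1 + (\<Sum>j<d. (\<beta>s j)\<^sup>2))}"
        unfolding \<omega>eq mem_Collect_eq case_prod_conv Let_def y_def[symmetric]
        using bound by blast
    qed
  qed
qed

theorem mainTheorem15:
  shows "\<exists>c C :: real. c > 0 \<and> C > 0 \<and>
    (\<forall>(n::nat) (d::nat) (k::nat) (\<beta>s::nat \<Rightarrow> real) (\<eta>::nat \<Rightarrow> real) (\<alpha>::real) (\<tau>::real).
      card {j. j < d \<and> \<beta>s j \<noteq> 0} \<le> k \<longrightarrow>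
      0 < \<alpha> \<longrightarrow> \<alpha> \<le> 1 \<longrightarrow>
      real (card {i. i < n \<and> \<bar>\<eta> i\<bar> \<le> 1}) \<ge> \<alpha> * real n \<longrightarrow>
      0 < \<tau> \<longrightarrow> \<tau> \<le> \<alpha>\<^sup>2 * real n \<longrightarrow>
      (\<exists>A \<in> sets (sample_space n d).
         measure (sample_space n d) A \<ge> 1 - 2 * exp (ln (real d) - c * \<tau>) \<and>
         A \<subseteq> {((X, w), \<sigma>). let y = (\<lambda>i. (\<Sum>j<d. X (i, j) * \<beta>s j) + \<eta> i);
                                 \<beta>' = cwm n y X w \<sigma>
                             in \<forall>S \<in> top_k_sets d k \<beta>'.
                                  (\<Sum>j<d. (\<beta>s j - restrict_to S \<beta>' j)\<^sup>2)
                                  \<le> C * (real k * \<tau>) / (\<alpha>\<^sup>2 * real n)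
                                      * (1 + (\<Sum>j<d. (\<beta>s j)\<^sup>2))}))"
  apply (rule exI[of _ "1 / 4251528"], rule exI[of _ 20])
  apply (intro conjI)
    apply simp
   apply simp
  apply (intro allI impI)
  apply (rule main_fixed)
       apply assumption+
  done

end
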